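(* Let $M$ be a set of machines, $c$ a constant such that "polynomially bounded" means "at most $|M|^c$", and $\mathcal{S}\subseteq M^*$ a polynomial-size domain set of polynomial-length sequences. The randomized algorithm StatelessNoisyScheduler described below (with shared randomness) has the following properties: (1) it is local and stateless: each machine decides which job in its queue to work on based only on the jobs in its queue, the current time step, $|M|$, $c$, $\beta$, $T$, and the shared random bits, and it does not use job states; (2) with high probability over the shared random string, for all job sets $J$ with $\mathrm{seq}(j)\in\mathcal{S}$ for all $j\in J$ and with polynomially bounded size, congestion and dilation, for all noise levels $\beta$ and all polynomially bounded $T$: the algorithm with parameters $\beta,T$ takes $\widetilde{O}(\beta T)$ time steps, and for every $(\beta,T)$-good subset $J_S\subseteq J$, at least a fourth of the jobs of $J_S$ are completed.
   Context: Job-shop scheduling with unit jobs: machines $M$, jobs $J$; each job $j$ has a sequence $\mathrm{seq}(j)\in M^*$, a unique identifier $\mathrm{ind}(j)\in I:=\{1,\dots,|M|^c\}$, and position $\mathrm{pos}(j)_t\in\{0,\dots,\mathrm{len}(\mathrm{seq}(j))\}$ (initially $0$; completed at the last value); $\mathrm{que}(m)_t=\{j:\mathrm{seq}(j)_{\mathrm{pos}(j)_t}=m\}$; each step each machine works on at most one job of its queue, which advances one position. $C(J)=\max_m\sum_j|\{i:\mathrm{seq}(j)_i=m\}|$, $D(J)=\max_j\mathrm{len}(\mathrm{seq}(j))$. A subset $J_S\subseteq J$ is $(\beta,T)$-good if $|J_S|\ge\frac1\beta|J|$ and $C(J_S)+D(J_S)\le T$. Standing assumption $|M|\ge32$. For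 $h:M^*\times I\to\{0,\dots,L-1\}$, $h(j):=h(\mathrm{seq}(j),\mathrm{ind}(j))$, $\mathrm{virt}(j,i)=h(j)+i$ if $i<\mathrm{len}(\mathrm{seq}(j))$ and $\infty$ otherwise, $\mathrm{virt}(j)_t=\mathrm{virt}(j,\mathrm{pos}(j)_t)$. StatelessWeakScheduler$(m,L,l,h,t)$ at subroutine-local time $t$: $T'=\lfloor t/l\rfloor$, $Q=\{j\in\mathrm{que}(m)_t:\mathrm{virt}(j)_t=T'\}$; if $0<|Q|\le l$ work on an arbitrary $j\in Q$, else do nothing. StatelessNoisyScheduler$(m,|M|,c,\beta,T)$: let $L$ be the least power of two with $L\ge T$, $l=\lceil150c\ln|M|/\ln\ln|M|\rceil$, $l'=4\beta l$, $k=\lceil8(b+1)(2c+1)\ln|M|/\ln l\rceil$ for a constant $b$; sample $k$ independent uniform hash functions $h_1,\dots,h_k:M^*\times I\to\{0,\dots,L-1\}$ from the shared randomness; for $j=1,\dots,k$, run StatelessWeakScheduler$(m,L,l',h_j,t)$ for $t=0,\dots,2Ll'-1$. "With high probability" means probability at least $1-|M|^{-b'}$ with $b'$ an arbitrarily large constant depending on $b$. $\widetilde O$ hides polylogarithmic factors in $|M|$. *)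

theory Defs
  imports "HOL-Probability.Probability"
begin

(* Machines are natural numbers; a machine set is a finite M :: nat set.
   A job is a pair (seq j, ind j) :: nat list \<times> nat. *)
type_synonym job = "nat list \<times> nat"

(* Shared random string: coordinate (e, i, x) is the value of the i-th hash
   function for range size L = 2^e at argument x = (sequence, identifier). *)
type_synonym rstring = "nat \<times> nat \<times> job \<Rightarrow> nat"

definition rand_space :: "rstring measure" where
  "rand_space = PiM UNIV (\<lambda>(e::nat, i::nat, x::job). measure_pmf (pmf_of_set {0..<(2::nat)^e}))"

definition congestion :: "nat set \<Rightarrow> job set \<Rightarrow> nat" where
  "congestion M J = Max (insert 0 ((\<lambda>m. \<Sum>j\<in>J. count_list (fst j) m) ` M))"

definition dilation :: "job set \<Rightarrow> nat" where
  "dilation J = Max (insert 0 ((\<lambda>j. length (fst j)) ` J))"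

definition good_subset :: "nat set \<Rightarrow> real \<Rightarrow> nat \<Rightarrow> job set \<Rightarrow> job set \<Rightarrow> bool" where
  "good_subset M \<beta> T J JS \<longleftrightarrow> JS \<subseteq> J \<and> real (card JS) \<ge> real (card J) / \<beta>
      \<and> congestion M JS + dilation JS \<le> T"

definition que :: "job set \<Rightarrow> (job \<Rightarrow> nat) \<Rightarrow> nat \<Rightarrow> (job \<times> nat) set" where
  "que J P m = {(j, P j) | j. j \<in> J \<and> P j < length (fst j) \<and> fst j ! P j = m}"

(* StatelessWeakScheduler(m, L, l', h, t): set of allowed actions
   (None = do nothing, Some j = work on j), given the queue of m with positions.
   virt(j)_t = h j + pos(j)_t, finite since queued jobs have pos < len. *)
definition weak_allowed :: "real \<Rightarrow> (job \<Rightarrow> nat) \<Rightarrow> nat \<Rightarrow> (job \<times> nat) set \<Rightarrow> job option set" where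
  "weak_allowed l' h t Qm =
     (let T' = \<lfloor>real t / l'\<rfloor>;
          Q = {j. \<exists>p. (j, p) \<in> Qm \<and> p < length (fst j) \<and> int (h j + p) = T'}
      in if 0 < card Q \<and> real (card Q) \<le> l' then Some ` Q else {None})"

definition sched_l :: "nat \<Rightarrow> nat \<Rightarrow> nat" where
  "sched_l n c = nat \<lceil>150 * real c * ln (real n) / ln (ln (real n))\<rceil>"

definition sched_l' :: "nat \<Rightarrow> nat \<Rightarrow> real \<Rightarrow> real" where
  "sched_l' n c \<beta> = 4 * \<beta> * real (sched_l n c)"

definition sched_k :: "nat \<Rightarrow> nat \<Rightarrow> real \<Rightarrow> nat" where
  "sched_k n c b = nat \<lceil>8 * (b + 1) * (2 * real c + 1) * ln (real n) / ln (real (sched_l n c))\<rceil>"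

definition sched_e :: "nat \<Rightarrow> nat" where
  "sched_e T = (LEAST e. T \<le> 2 ^ e)"

(* number of steps t = 0, ..., 2 L l' - 1 of one weak-scheduler call *)
definition weak_steps :: "nat \<Rightarrow> nat \<Rightarrow> real \<Rightarrow> nat \<Rightarrow> nat" where
  "weak_steps n c \<beta> T = card {t::nat. real t \<le> 2 * real ((2::nat) ^ sched_e T) * sched_l' n c \<beta> - 1}"

definition noisy_time :: "nat \<Rightarrow> nat \<Rightarrow> real \<Rightarrow> real \<Rightarrow> nat \<Rightarrow> nat" where
  "noisy_time n c b \<beta> T = sched_k n c b * weak_steps n c \<beta> T"

(* Call number s (0-based) uses hash h_(s+1). *)
definition noisy_allowed :: "nat \<Rightarrow> nat \<Rightarrow> real \<Rightarrow> real \<Rightarrow> nat \<Rightarrow> rstring \<Rightarrow> nat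
      \<Rightarrow> (job \<times> nat) set \<Rightarrow> job option set" where
  "noisy_allowed n c b \<beta> T \<omega> t Qm =
     (let N = weak_steps n c \<beta> T; s = t div N; e = sched_e T
      in if s < sched_k n c b
         then weak_allowed (sched_l' n c \<beta>) (\<lambda>x. \<omega> (e, s, x)) (t mod N) Qm
         else {None})"

(* P t j = pos(j)_t; a run of the algorithm on job set J (every arbitrary choice allowed) *)
definition noisy_run :: "nat set \<Rightarrow> nat \<Rightarrow> real \<Rightarrow> real \<Rightarrow> nat \<Rightarrow> rstring \<Rightarrow> job set
      \<Rightarrow> (nat \<Rightarrow> job \<Rightarrow> nat) \<Rightarrow> bool" where
  "noisy_run M c b \<beta> T \<omega> J P \<longleftrightarrow>
     P 0 = (\<lambda>j. 0) \<and>
     (\<forall>t. \<exists>ch :: nat \<Rightarrow> job option.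
        (\<forall>m\<in>M. ch m \<in> noisy_allowed (card M) c b \<beta> T \<omega> t (que J (P t) m)) \<and>
        (\<forall>m. m \<notin> M \<longrightarrow> ch m = None) \<and>
        (\<forall>j. P (Suc t) j = (if \<exists>m. ch m = Some j then Suc (P t j) else P t j)))"

definition valid_jobs :: "nat set \<Rightarrow> nat \<Rightarrow> nat list set \<Rightarrow> job set \<Rightarrow> bool" where
  "valid_jobs M c S J \<longleftrightarrow> finite J \<and> inj_on snd J \<and>
     (\<forall>j\<in>J. fst j \<in> S \<and> snd j \<in> {1..card M ^ c}) \<and>
     card J \<le> card M ^ c \<and> congestion M J \<le> card M ^ c \<and> dilation J \<le> card M ^ c"

end

theory Submission
  imports Defs
begin

lemma card_nat_le_real:
  assumes "0 \<le> X"
  shows "card {t::nat. real t \<le> X} = nat \<lfloor>X\<rfloor> + 1"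
proof -
  have "{t::nat. real t \<le> X} = {..nat \<lfloor>X\<rfloor>}"
  proof (intro set_eqI iffI)
    fix t assume "t \<in> {t::nat. real t \<le> X}"
    then have "real t \<le> X" by simp
    then have "int t \<le> \<lfloor>X\<rfloor>" by (simp add: le_floor_iff)
    then show "t \<in> {..nat \<lfloor>X\<rfloor>}" by simp
  next
    fix t assume "t \<in> {..nat \<lfloor>X\<rfloor>}"
    then have "int t \<le> \<lfloor>X\<rfloor>" using assms by (simp add: le_nat_iff)
    then show "t \<in> {t::nat. real t \<le> X}" by (simp add: le_floor_iff)
  qed
  then show ?thesis by simp
qed

locale runctx =
  fixes M :: "nat set" and c :: nat and b \<beta> :: real and T :: nat and \<omega> :: rstring
    and J :: "job set" and P :: "nat \<Rightarrow> job \<Rightarrow> nat"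
  assumes run: "noisy_run M c b \<beta> T \<omega> J P"
    and finJ: "finite J"
    and seqM: "\<forall>j\<in>J. set (fst j) \<subseteq> M"
    and lp1: "sched_l' (card M) c \<beta> \<ge> 1"
begin

definition "NN = weak_steps (card M) c \<beta> T"
definition "KK = sched_k (card M) c b"
definition "lp = sched_l' (card M) c \<beta>"
definition "LL = (2::nat) ^ sched_e T"
definition "hs s j = \<omega> (sched_e T, s, j)"
definition "ph u = nat \<lfloor>real u / lp\<rfloor>"
definition "Qs t m = {j\<in>J. P t j < length (fst j) \<and> fst j ! P t j = m \<and>
    hs (t div NN) j + P t j = ph (t mod NN)}"

lemma lp_ge1: "lp \<ge> 1" using lp1 by (simp add: lp_def)

lemma LL_ge1: "LL \<ge> 1" unfolding LL_def by simp

lemma X_nonneg: "0 \<le> 2 * real LL * lp - 1"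
proof -
  have "real LL \<ge> 1" using LL_ge1 by simp
  then have "real LL * lp \<ge> 1" using lp_ge1 by (metis mult_mono' mult_1 zero_le_one)
  then show ?thesis by simp
qed

lemma NN_eq: "NN = nat \<lfloor>2 * real LL * lp - 1\<rfloor> + 1"
proof -
  note X_nonneg
  then show ?thesis unfolding NN_def weak_steps_def LL_def lp_def
    by (subst card_nat_le_real) (auto simp: LL_def lp_def)
qed

lemma NN_pos: "NN > 0" using NN_eq by simp

lemma NN_gt: "real NN > 2 * real LL * lp - 1"
proof -
  have "\<lfloor>2 * real LL * lp - 1\<rfloor> \<ge> 0" using X_nonneg by simp
  then have "real NN = real_of_int \<lfloor>2 * real LL * lp - 1\<rfloor> + 1" using NN_eq by simp
  then show ?thesis using real_of_int_floor_add_one_gt[of "2 * real LL * lp - 1"] by linarith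
qed

lemma ph_mono: "u \<le> v \<Longrightarrow> ph u \<le> ph v"
  unfolding ph_def using lp_ge1
  by (intro nat_mono floor_mono divide_right_mono) auto

lemma ph_Suc: "ph (Suc u) \<le> Suc (ph u)"
proof -
  have "real (Suc u) / lp \<le> real u / lp + 1" using lp_ge1 by (simp add: divide_simps)
  then have "\<lfloor>real (Suc u) / lp\<rfloor> \<le> \<lfloor>real u / lp\<rfloor> + 1"
    by (metis floor_add_int floor_mono of_int_1)
  moreover have "\<lfloor>real u / lp\<rfloor> \<ge> 0" using lp_ge1 by simp
  ultimately show ?thesis unfolding ph_def by linarith
qed

lemma Qs_eq:
  "{j. \<exists>p. (j, p) \<in> que J (P t) m \<and> p < length (fst j) \<and> int (hs (t div NN) j + p) = \<lfloor>real (t mod NN) / lp\<rfloor>}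
   = Qs t m"
proof -
  have "\<lfloor>real (t mod NN) / lp\<rfloor> \<ge> 0" using lp_ge1 by simp
  then have *: "\<And>x. (int x = \<lfloor>real (t mod NN) / lp\<rfloor>) = (x = ph (t mod NN))"
    unfolding ph_def by linarith
  show ?thesis unfolding Qs_def que_def * by auto
qed

lemma allowed_eq: "noisy_allowed (card M) c b \<beta> T \<omega> t (que J (P t) m) =
  (if t div NN < KK then (if 0 < card (Qs t m) \<and> real (card (Qs t m)) \<le> lp then Some ` Qs t m else {None}) else {None})"
proof -
  have "weak_allowed lp (hs (t div NN)) (t mod NN) (que J (P t) m) =
     (if 0 < card (Qs t m) \<and> real (card (Qs t m)) \<le> lp then Some ` Qs t m else {None})"
    unfolding weak_allowed_def Let_def Qs_eq ..
  then show ?thesis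
    unfolding noisy_allowed_def Let_def NN_def[symmetric] KK_def[symmetric] lp_def[symmetric]
    by (simp add: hs_def[abs_def])
qed

definition "ch = (SOME ch. \<forall>t. (\<forall>m\<in>M. ch t m \<in> noisy_allowed (card M) c b \<beta> T \<omega> t (que J (P t) m)) \<and>
        (\<forall>m. m \<notin> M \<longrightarrow> ch t m = None) \<and>
        (\<forall>j. P (Suc t) j = (if \<exists>m. ch t m = Some j then Suc (P t j) else P t j)))"

lemma ch_prop: "\<forall>t. (\<forall>m\<in>M. ch t m \<in> noisy_allowed (card M) c b \<beta> T \<omega> t (que J (P t) m)) \<and>
        (\<forall>m. m \<notin> M \<longrightarrow> ch t m = None) \<and>
        (\<forall>j. P (Suc t) j = (if \<exists>m. ch t m = Some j then Suc (P t j) else P t j))"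
proof -
  have "\<forall>t. \<exists>ch. (\<forall>m\<in>M. ch m \<in> noisy_allowed (card M) c b \<beta> T \<omega> t (que J (P t) m)) \<and>
        (\<forall>m. m \<notin> M \<longrightarrow> ch m = None) \<and>
        (\<forall>j. P (Suc t) j = (if \<exists>m. ch m = Some j then Suc (P t j) else P t j))"
    using run unfolding noisy_run_def by blast
  then have "\<exists>ch. \<forall>t. (\<forall>m\<in>M. ch t m \<in> noisy_allowed (card M) c b \<beta> T \<omega> t (que J (P t) m)) \<and>
        (\<forall>m. m \<notin> M \<longrightarrow> ch t m = None) \<and>
        (\<forall>j. P (Suc t) j = (if \<exists>m. ch t m = Some j then Suc (P t j) else P t j))"
    by (rule choice)
  then show ?thesis unfolding ch_def by (rule someI_ex)
qed

lemma P0: "P 0 j = 0" using run unfolding noisy_run_def by simp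

lemma finQ: "finite (Qs t m)" unfolding Qs_def using finJ by auto

lemma worked:
  assumes "P (Suc t) j \<noteq> P t j"
  shows "t div NN < KK \<and> P (Suc t) j = Suc (P t j) \<and>
         (\<exists>m\<in>M. j \<in> Qs t m \<and> real (card (Qs t m)) \<le> lp)"
proof -
  from assms ch_prop obtain m where m: "ch t m = Some j" and PS: "P (Suc t) j = Suc (P t j)"
    by metis
  have "m \<in> M" using m ch_prop by (metis option.simps(3))
  then have "Some j \<in> noisy_allowed (card M) c b \<beta> T \<omega> t (que J (P t) m)"
    using ch_prop m by metis
  then show ?thesis unfolding allowed_eq using PS \<open>m \<in> M\<close>
    by (auto split: if_splits)
qed

lemma works:
  assumes "t div NN < KK" "m \<in> M" "0 < card (Qs t m)" "real (card (Qs t m)) \<le> lp"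
  shows "\<exists>j\<in>Qs t m. P (Suc t) j = Suc (P t j)"
proof -
  have "ch t m \<in> Some ` Qs t m" using ch_prop assms unfolding allowed_eq by metis
  then obtain j where "j \<in> Qs t m" "ch t m = Some j" by auto
  then show ?thesis using ch_prop by metis
qed

lemma P_Suc_cases: "P (Suc t) j = P t j \<or> P (Suc t) j = Suc (P t j)"
  using worked by blast

lemma P_mono_Suc: "P t j \<le> P (Suc t) j" using P_Suc_cases[of t j] by auto

lemma P_mono: "t \<le> t' \<Longrightarrow> P t j \<le> P t' j"
  by (induction rule: dec_induct) (auto intro: order_trans P_mono_Suc)

lemma P_le_len: "j \<in> J \<Longrightarrow> P t j \<le> length (fst j)"
proof (induction t)
  case 0 then show ?case by (simp add: P0)
next
  case (Suc t)
  show ?case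
  proof (cases "P (Suc t) j = P t j")
    case True then show ?thesis using Suc by simp
  next
    case False
    then have "P (Suc t) j = Suc (P t j)" "\<exists>m. j \<in> Qs t m" using worked by blast+
    then show ?thesis unfolding Qs_def by auto
  qed
qed

lemma notin_not_worked: "(\<And>m. j \<notin> Qs t m) \<Longrightarrow> P (Suc t) j = P t j"
  using worked by blast

end

context runctx begin

lemma sameCall: "Suc t mod NN \<noteq> 0 \<Longrightarrow> Suc t div NN = t div NN \<and> Suc t mod NN = Suc (t mod NN)"
  using NN_pos by (metis div_Suc mod_Suc)

lemma divmod: "u < NN \<Longrightarrow> (s*NN+u) div NN = s \<and> (s*NN+u) mod NN = u"
  using NN_pos by simp

lemma Qs_unique: "j \<in> Qs t m \<Longrightarrow> j \<in> Qs t' m' \<Longrightarrow> P t' j = P t j \<Longrightarrow> m = m'"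
  unfolding Qs_def by auto

lemma shrink:
  assumes "Suc t mod NN \<noteq> 0" "ph (Suc (t mod NN)) = ph (t mod NN)"
  shows "Qs (Suc t) m \<subseteq> Qs t m - {j. P (Suc t) j = Suc (P t j)}"
proof
  fix j assume j: "j \<in> Qs (Suc t) m"
  note sc = sameCall[OF assms(1)]
  have nw: "P (Suc t) j = P t j"
  proof (rule ccontr)
    assume "P (Suc t) j \<noteq> P t j"
    then obtain m' where "j \<in> Qs t m'" "P (Suc t) j = Suc (P t j)" using worked by blast
    then show False using j sc assms(2) unfolding Qs_def by auto
  qed
  then show "j \<in> Qs t m - {j. P (Suc t) j = Suc (P t j)}"
    using j sc assms(2) unfolding Qs_def by auto
qed

lemma const_fail:
  assumes "Suc t mod NN \<noteq> 0" "ph (Suc (t mod NN)) = ph (t mod NN)" "real (card (Qs t m)) > lp"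
  shows "Qs (Suc t) m = Qs t m"
proof
  show "Qs (Suc t) m \<subseteq> Qs t m" using shrink[OF assms(1,2)] by blast
  show "Qs t m \<subseteq> Qs (Suc t) m"
  proof
    fix j assume j: "j \<in> Qs t m"
    note sc = sameCall[OF assms(1)]
    have nw: "P (Suc t) j = P t j"
    proof (rule ccontr)
      assume "P (Suc t) j \<noteq> P t j"
      then obtain m' where "j \<in> Qs t m'" "real (card (Qs t m')) \<le> lp" using worked by blast
      moreover have "m' = m" using Qs_unique[OF \<open>j \<in> Qs t m'\<close> j] by simp
      ultimately show False using assms(3) by simp
    qed
    then show "j \<in> Qs (Suc t) m" using j sc assms(2) unfolding Qs_def by auto
  qed
qed

lemma back_count:
  assumes u: "u < NN" and j: "j \<in> Qs (s*NN+u) m" and le: "real (card (Qs (s*NN+u) m)) \<le> lp"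
    and s: "s < KK" and m: "m \<in> M"
  shows "d \<le> u \<Longrightarrow> ph (u-d) = ph u \<Longrightarrow> real (card (Qs (s*NN+(u-d)) m)) \<le> lp \<and>
           card (Qs (s*NN+(u-d)) m) \<ge> card (Qs (s*NN+u) m) + d"
proof (induction d)
  case 0 then show ?case using le by simp
next
  case (Suc d)
  have phd: "ph (u-d) = ph u"
    using ph_mono[of "u - Suc d" "u-d"] ph_mono[of "u-d" u] Suc.prems by simp
  from Suc.IH[OF _ phd] Suc.prems have IH: "real (card (Qs (s*NN+(u-d)) m)) \<le> lp"
     "card (Qs (s*NN+(u-d)) m) \<ge> card (Qs (s*NN+u) m) + d" by auto
  define t' where "t' = s*NN + (u - Suc d)"
  have St: "Suc t' = s*NN+(u-d)" using Suc.prems unfolding t'_def by simp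
  have dm: "t' div NN = s" "t' mod NN = u - Suc d" using divmod[of "u - Suc d" s] u unfolding t'_def by auto
  have dm2: "Suc t' mod NN = u - d" using divmod[of "u - d" s] u St by simp
  have c1: "Suc t' mod NN \<noteq> 0" using dm2 Suc.prems by simp
  have c2: "ph (Suc (t' mod NN)) = ph (t' mod NN)" using dm dm2 sameCall[OF c1] phd Suc.prems by simp
  have cj: "card (Qs (s*NN+u) m) \<ge> 1" using j finQ by (metis One_nat_def Suc_leI card_gt_0_iff empty_iff)
  have nf: "\<not> real (card (Qs t' m)) > lp"
  proof
    assume "real (card (Qs t' m)) > lp"
    then have "Qs (Suc t') m = Qs t' m" using const_fail[OF c1 c2] by simp
    then show False using IH(1) St \<open>real (card (Qs t' m)) > lp\<close> by simp
  qed
  have "card (Qs t' m) \<noteq> 0"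
  proof
    assume "card (Qs t' m) = 0"
    then have "Qs t' m = {}" using finQ by simp
    then have "Qs (Suc t') m = {}" using shrink[OF c1 c2] by blast
    then show False using IH(2) cj St by simp
  qed
  then obtain j' where j': "j' \<in> Qs t' m" "P (Suc t') j' = Suc (P t' j')"
    using works[of t' m] dm s m nf by fastforce
  have "Qs (Suc t') m \<subseteq> Qs t' m - {j'}" using shrink[OF c1 c2] j' by blast
  then have "card (Qs (Suc t') m) \<le> card (Qs t' m - {j'})" using finQ by (simp add: card_mono)
  then have "card (Qs (Suc t') m) + 1 \<le> card (Qs t' m)" using j'(1) finQ
    by (metis card_Diff1_less add.commute le_less_trans less_iff_Suc_add Suc_eq_plus1 le_simps(3))
  moreover have "card (Qs (Suc t') m) \<ge> card (Qs (s*NN+u) m) + d" unfolding St by (rule IH(2))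
  moreover have e: "s*NN+(u - Suc d) = t'" by (simp add: t'_def)
  ultimately show ?case unfolding e using nf by linarith
qed

end

context runctx begin

lemma ph_floor: "int (ph u) = \<lfloor>real u / lp\<rfloor>"
  unfolding ph_def using lp_ge1 by simp

lemma derail:
  assumes u: "u < NN" and s: "s < KK" and m: "m \<in> M" and j: "j \<in> Qs (s*NN+u) m"
    and le: "real (card (Qs (s*NN+u) m)) \<le> lp"
    and nw: "P (Suc (s*NN+u)) j = P (s*NN+u) j" and phs: "ph (Suc u) \<noteq> ph u"
  shows False
proof -
  have dm: "(s*NN+u) div NN = s" "(s*NN+u) mod NN = u" using divmod u by auto
  have cpos: "0 < card (Qs (s*NN+u) m)" using j finQ card_gt_0_iff by blast
  obtain j' where j': "j' \<in> Qs (s*NN+u) m" "P (Suc (s*NN+u)) j' = Suc (P (s*NN+u) j')"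
    using works[of "s*NN+u" m] dm s m cpos le by auto
  have "j' \<noteq> j" using j' nw by auto
  then have "{j, j'} \<subseteq> Qs (s*NN+u) m" using j j' by auto
  then have c2: "card (Qs (s*NN+u) m) \<ge> 2" using finQ \<open>j' \<noteq> j\<close>
    by (metis card_2_iff card_mono)
  define \<tau> where "\<tau> = ph u"
  have phS: "ph (Suc u) = Suc \<tau>" using ph_Suc[of u] ph_mono[of u "Suc u"] phs unfolding \<tau>_def by simp
  have lp0: "lp > 0" using lp_ge1 by simp
  have tau_le: "real \<tau> * lp \<le> real u"
  proof -
    have "real_of_int (int \<tau>) \<le> real u / lp" using ph_floor[of u] unfolding \<tau>_def by (metis of_int_floor_le)
    then show ?thesis using lp0 by (simp add: field_simps)
  qed
  have tau_ge: "real (Suc \<tau>) * lp \<le> real (Suc u)"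
  proof -
    have "real_of_int (int (Suc \<tau>)) \<le> real (Suc u) / lp" using ph_floor[of "Suc u"] phS by (metis of_int_floor_le)
    then show ?thesis using lp0 by (simp add: field_simps)
  qed
  define u0 where "u0 = nat \<lceil>real \<tau> * lp\<rceil>"
  have u0r: "real u0 = real_of_int \<lceil>real \<tau> * lp\<rceil>" unfolding u0_def using lp0 by simp
  have u0a: "real \<tau> * lp \<le> real u0" using u0r by (simp add: le_of_int_ceiling)
  have u0b: "real u0 < real \<tau> * lp + 1" using u0r ceiling_correct[of "real \<tau> * lp"] by linarith
  have u0u: "u0 \<le> u"
  proof -
    have "\<lceil>real \<tau> * lp\<rceil> \<le> int u" using tau_le ceiling_le_iff by (metis of_int_of_nat_eq)
    then show ?thesis unfolding u0_def using nat_le_iff by blast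
  qed
  have phu0: "ph u0 = \<tau>"
  proof -
    have "real \<tau> \<le> real u0 / lp" using u0a lp0 by (simp add: field_simps)
    moreover have "real u0 / lp < real \<tau> + 1" using u0b lp0 lp_ge1 by (simp add: field_simps)
    ultimately have "\<lfloor>real u0 / lp\<rfloor> = int \<tau>" by (simp add: floor_eq_iff)
    then show ?thesis unfolding ph_def by simp
  qed
  have bc: "real (card (Qs (s*NN+(u-(u-u0))) m)) \<le> lp \<and>
           card (Qs (s*NN+(u-(u-u0))) m) \<ge> card (Qs (s*NN+u) m) + (u-u0)"
    using back_count[OF u j le s m, of "u - u0"] u0u phu0 unfolding \<tau>_def by simp
  then have "real (card (Qs (s*NN+u) m)) + real u - real u0 \<le> lp" using u0u
    by (smt (verit) of_nat_add of_nat_diff of_nat_le_iff diff_diff_cancel)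
  moreover have "real (card (Qs (s*NN+u) m)) \<ge> 2" using c2 by simp
  moreover have "lp + real \<tau> * lp \<le> 1 + real u" using tau_ge by (simp add: algebra_simps)
  ultimately show False using u0b by linarith
qed

lemma progress:
  assumes s: "s < KK" and jJ: "j \<in> J"
  shows "u \<le> NN \<Longrightarrow> (\<exists>u'<u. \<exists>m\<in>M. j \<in> Qs (s*NN+u') m \<and> real (card (Qs (s*NN+u') m)) > lp)
     \<or> P (s*NN+u) j = length (fst j) \<or> hs s j + P (s*NN+u) j \<ge> ph u"
proof (induction u)
  case 0 then show ?case by (simp add: ph_def)
next
  case (Suc u)
  then have u: "u < NN" by simp
  define t where "t = s*NN+u"
  have tS: "s*NN + Suc u = Suc t" unfolding t_def by simp
  have dm: "t div NN = s" "t mod NN = u" using divmod u unfolding t_def by auto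
  from Suc.IH u consider
    (w) "\<exists>u'<u. \<exists>m\<in>M. j \<in> Qs (s*NN+u') m \<and> real (card (Qs (s*NN+u') m)) > lp"
    | (c) "P t j = length (fst j)" | (g) "hs s j + P t j \<ge> ph u" "P t j \<noteq> length (fst j)"
    unfolding t_def by fastforce
  then show ?case
  proof cases
    case w then show ?thesis using less_SucI by blast
  next
    case c
    have "P (Suc t) j = P t j"
    proof (rule ccontr)
      assume "P (Suc t) j \<noteq> P t j"
      then obtain m where "j \<in> Qs t m" using worked by blast
      then show False using c unfolding Qs_def by simp
    qed
    then show ?thesis using c tS by simp
  next
    case g
    show ?thesis
    proof (cases "P (Suc t) j = Suc (P t j)")
      case True
      then show ?thesis using g ph_Suc[of u] tS by simp
    next
      case False
      then have nw: "P (Suc t) j = P t j" using P_Suc_cases by blast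
      show ?thesis
      proof (cases "hs s j + P t j > ph u")
        case True then show ?thesis using nw ph_Suc[of u] tS by simp
      next
        case False
        then have eq: "hs s j + P t j = ph u" using g by simp
        have plt: "P t j < length (fst j)" using P_le_len[OF jJ, of t] g by simp
        define m where "m = fst j ! P t j"
        have mM: "m \<in> M" using seqM jJ plt unfolding m_def by (meson nth_mem subsetD)
        have jQ: "j \<in> Qs t m" unfolding Qs_def m_def using jJ plt eq dm by simp
        show ?thesis
        proof (cases "real (card (Qs t m)) > lp")
          case True then show ?thesis using jQ mM unfolding t_def by blast
        next
          case False
          show ?thesis
          proof (cases "ph (Suc u) = ph u")
            case True then show ?thesis using nw eq tS by simp
          next
            case phne: False
            have False using derail[OF u s mM _ _ _ phne] jQ False nw unfolding t_def by simp
            then show ?thesis ..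
          qed
        qed
      qed
    qed
  qed
qed

lemma stuck:
  assumes u: "u < NN" and j: "j \<in> Qs (s*NN+u) m" and gt: "real (card (Qs (s*NN+u) m)) > lp"
  shows "u + d \<le> NN \<Longrightarrow> P (s*NN+(u+d)) j = P (s*NN+u) j \<and>
     (u + d < NN \<and> ph (u+d) = ph u \<longrightarrow> Qs (s*NN+(u+d)) m = Qs (s*NN+u) m)"
proof (induction d)
  case 0 then show ?case by simp
next
  case (Suc d)
  then have ud: "u + d < NN" by simp
  from Suc.IH ud have IH: "P (s*NN+(u+d)) j = P (s*NN+u) j"
    "ph (u+d) = ph u \<Longrightarrow> Qs (s*NN+(u+d)) m = Qs (s*NN+u) m" by auto
  define t where "t = s*NN+(u+d)"
  have tS: "s*NN + (u + Suc d) = Suc t" unfolding t_def by simp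
  have dm: "t div NN = s" "t mod NN = u+d" using divmod ud unfolding t_def by auto
  have dm0: "(s*NN+u) div NN = s" "(s*NN+u) mod NN = u" using divmod u by auto
  have jeq: "hs s j + P (s*NN+u) j = ph u" using j dm0 unfolding Qs_def by simp
  have nw: "P (Suc t) j = P t j"
  proof (rule ccontr)
    assume "P (Suc t) j \<noteq> P t j"
    then obtain m' where m': "j \<in> Qs t m'" "real (card (Qs t m')) \<le> lp" using worked by blast
    have "ph (u+d) = ph u" using m'(1) dm IH(1) jeq unfolding Qs_def t_def by simp
    then have "Qs t m = Qs (s*NN+u) m" using IH(2) unfolding t_def by simp
    moreover have "m' = m" using Qs_unique[OF j m'(1)] IH(1) unfolding t_def by simp
    ultimately show False using m'(2) gt by simp
  qed
  have Qp: "u + Suc d < NN \<and> ph (u + Suc d) = ph u \<longrightarrow> Qs (Suc t) m = Qs (s*NN+u) m"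
  proof
    assume a: "u + Suc d < NN \<and> ph (u + Suc d) = ph u"
    have p1: "ph (u+d) = ph u" using ph_mono[of u "u+d"] ph_mono[of "u+d" "u + Suc d"] a by simp
    have Qt: "Qs t m = Qs (s*NN+u) m" using IH(2)[OF p1] unfolding t_def by simp
    have "Suc t mod NN = u + Suc d" using divmod[of "u + Suc d" s] a unfolding tS by blast
    then have c1: "Suc t mod NN \<noteq> 0" by simp
    have c2: "ph (Suc (t mod NN)) = ph (t mod NN)" using dm a p1 by simp
    show "Qs (Suc t) m = Qs (s*NN+u) m" using const_fail[OF c1 c2] Qt gt by simp
  qed
  show ?case using nw IH(1) Qp tS unfolding t_def by simp
qed

lemma unique_le:
  assumes "u1 \<le> u2" "u2 < NN" "j \<in> Qs (s*NN+u1) m1" "lp < real (card (Qs (s*NN+u1) m1))"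
    "j \<in> Qs (s*NN+u2) m2"
  shows "m1 = m2 \<and> ph u1 = ph u2"
proof -
  have "P (s*NN+(u1+(u2-u1))) j = P (s*NN+u1) j"
    using stuck[OF _ assms(3,4), of "u2-u1"] assms by simp
  then have e: "P (s*NN+u2) j = P (s*NN+u1) j" using assms by simp
  have d1: "(s*NN+u1) div NN = s" "(s*NN+u1) mod NN = u1" using divmod assms by auto
  have d2: "(s*NN+u2) div NN = s" "(s*NN+u2) mod NN = u2" using divmod assms by auto
  show ?thesis using assms(3,5) e d1 d2 unfolding Qs_def by auto
qed

lemma unique:
  assumes "u1 < NN" "u2 < NN" "j \<in> Qs (s*NN+u1) m1" "lp < real (card (Qs (s*NN+u1) m1))"
    "j \<in> Qs (s*NN+u2) m2" "lp < real (card (Qs (s*NN+u2) m2))"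
  shows "m1 = m2 \<and> ph u1 = ph u2"
proof (cases "u1 \<le> u2")
  case True then show ?thesis using unique_le assms by blast
next
  case False then show ?thesis using unique_le[of u2 u1] assms by fastforce
qed

end

context runctx begin

definition "Fs s = {(m, \<tau>). m \<in> M \<and> (\<exists>u<NN. ph u = \<tau> \<and> lp < real (card (Qs (s*NN+u) m)))}"

lemma Fs_card:
  assumes finM: "finite M"
  shows "real (card (Fs s)) * lp \<le> real (card J)"
proof -
  define U where "U f = (SOME u. u<NN \<and> ph u = snd f \<and> lp < real (card (Qs (s*NN+u) (fst f))))" for f
  define W where "W f = Qs (s*NN + U f) (fst f)" for f
  have UP: "U f < NN \<and> ph (U f) = snd f \<and> lp < real (card (Qs (s*NN+U f) (fst f)))" if "f \<in> Fs s" for f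
  proof -
    obtain m \<tau> where f: "f = (m, \<tau>)" by fastforce
    then have "\<exists>u. u<NN \<and> ph u = snd f \<and> lp < real (card (Qs (s*NN+u) (fst f)))"
      using that unfolding Fs_def by auto
    then show ?thesis unfolding U_def by (rule someI_ex)
  qed
  have finF: "finite (Fs s)"
  proof (rule finite_subset)
    show "Fs s \<subseteq> M \<times> (ph ` {..<NN})" unfolding Fs_def by auto
    show "finite (M \<times> (ph ` {..<NN}))" using finM by simp
  qed
  have disj: "W f1 \<inter> W f2 = {}" if "f1 \<in> Fs s" "f2 \<in> Fs s" "f1 \<noteq> f2" for f1 f2
  proof (rule ccontr)
    assume "W f1 \<inter> W f2 \<noteq> {}"
    then obtain j where "j \<in> W f1" "j \<in> W f2" by blast
    then have "fst f1 = fst f2 \<and> ph (U f1) = ph (U f2)"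
      using unique[of "U f1" "U f2" j s "fst f1" "fst f2"] UP[OF that(1)] UP[OF that(2)]
      unfolding W_def by blast
    then show False using UP[OF that(1)] UP[OF that(2)] that(3) by (metis prod.collapse)
  qed
  have "(\<Sum>f\<in>Fs s. card (W f)) = card (\<Union>f\<in>Fs s. W f)"
    using card_UN_disjoint[OF finF, of W] disj finQ unfolding W_def by auto
  also have "\<dots> \<le> card J"
    by (rule card_mono[OF finJ]) (auto simp: W_def Qs_def)
  finally have "real (\<Sum>f\<in>Fs s. card (W f)) \<le> real (card J)" by linarith
  moreover have "real (card (Fs s)) * lp \<le> (\<Sum>f\<in>Fs s. real (card (W f)))"
  proof -
    have "(\<Sum>f\<in>Fs s. lp) \<le> (\<Sum>f\<in>Fs s. real (card (W f)))"
      by (rule sum_mono) (use UP in \<open>auto simp: W_def less_eq_real_def\<close>)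
    then show ?thesis by simp
  qed
  ultimately show ?thesis by simp
qed

lemma ph_NN: "ph NN \<ge> 2 * LL - 1"
proof -
  have lp0: "lp > 0" using lp_ge1 by simp
  have "real NN > real (2*LL - 1) * lp"
  proof -
    have "real (2*LL - 1) * lp = 2 * real LL * lp - lp" using LL_ge1 by (simp add: of_nat_diff algebra_simps)
    then show ?thesis using NN_gt lp_ge1 by linarith
  qed
  then have "real (2*LL - 1) \<le> real NN / lp" using lp0 by (simp add: field_simps)
  then have "int (2*LL-1) \<le> \<lfloor>real NN / lp\<rfloor>" by (simp add: le_floor_iff)
  then show ?thesis unfolding ph_def by linarith
qed

lemma uncompleted_cover:
  assumes s: "s < KK" and jJ: "j \<in> J" and nc: "P (KK*NN) j \<noteq> length (fst j)"
    and hl: "hs s j < LL" and ll: "length (fst j) \<le> LL"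
  shows "\<exists>p<length (fst j). (fst j ! p, hs s j + p) \<in> Fs s \<and> hs s j + p < 2*LL"
proof -
  have notc: "P (s*NN+NN) j \<noteq> length (fst j)"
  proof
    assume a: "P (s*NN+NN) j = length (fst j)"
    have "s*NN+NN \<le> KK*NN" using s by (metis Suc_leI add.commute mult_Suc mult_le_mono1)
    then have "P (s*NN+NN) j \<le> P (KK*NN) j" by (rule P_mono)
    then show False using a P_le_len[OF jJ, of "KK*NN"] nc by simp
  qed
  from progress[OF s jJ, of NN] consider
    (w) u' m where "u' < NN" "m \<in> M" "j \<in> Qs (s*NN+u') m" "real (card (Qs (s*NN+u') m)) > lp"
    | (c) "P (s*NN+NN) j = length (fst j)" | (g) "hs s j + P (s*NN+NN) j \<ge> ph NN" by blast
  then show ?thesis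
  proof cases
    case w
    have dm: "(s*NN+u') div NN = s" "(s*NN+u') mod NN = u'" using divmod w(1) by auto
    define p where "p = P (s*NN+u') j"
    have p: "p < length (fst j)" "fst j ! p = m" "hs s j + p = ph u'"
      using w(3) dm unfolding Qs_def p_def by auto
    have "(fst j ! p, hs s j + p) \<in> Fs s" unfolding Fs_def using p w by auto
    moreover have "hs s j + p < 2*LL" using p(1) hl ll by simp
    ultimately show ?thesis using p(1) by blast
  next
    case c then show ?thesis using notc by simp
  next
    case g
    have "P (s*NN+NN) j \<ge> length (fst j)" using g ph_NN hl ll by simp
    then show ?thesis using notc P_le_len[OF jJ, of "s*NN+NN"] by simp
  qed
qed

end

context runctx begin
lemma finite_Fs: "finite M \<Longrightarrow> finite (Fs s)"
proof (rule finite_subset)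
  show "Fs s \<subseteq> M \<times> (ph ` {..<NN})" unfolding Fs_def by auto
  assume "finite M" then show "finite (M \<times> (ph ` {..<NN}))" by simp
qed
end

definition badE :: "nat set \<Rightarrow> nat \<Rightarrow> nat \<Rightarrow> job set \<Rightarrow> nat \<Rightarrow> (nat \<Rightarrow> job \<Rightarrow> nat) \<Rightarrow> bool" where
  "badE M l K pool e w \<longleftrightarrow> (\<exists>Y. Y \<subseteq> pool \<and> Y \<noteq> {} \<and> (\<forall>m\<in>M. (\<Sum>j\<in>Y. count_list (fst j) m) \<le> 2^e) \<and>
    (\<forall>s<K. \<exists>F. F \<subseteq> M \<times> {..<2*2^e} \<and> 3*l*card F < card Y \<and>
        (\<forall>j\<in>Y. \<exists>p<length (fst j). (fst j ! p, w s j + p) \<in> F)))"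

definition pool :: "nat set \<Rightarrow> nat \<Rightarrow> nat list set \<Rightarrow> job set" where
  "pool M c S = S \<times> {1..card M ^ c}"

definition goodset :: "nat set \<Rightarrow> nat \<Rightarrow> real \<Rightarrow> nat list set \<Rightarrow> rstring set" where
  "goodset M c b S = {\<omega>. \<forall>e. 2^e < 2*card M^c \<longrightarrow>
      (\<forall>s<sched_k (card M) c b. \<forall>j\<in>pool M c S. \<omega> (e, s, j) < 2^e) \<and>
      \<not> badE M (sched_l (card M) c) (sched_k (card M) c b) (pool M c S) e (\<lambda>s j. \<omega> (e, s, j))}"

lemma sched_e_bounds:
  assumes "1 \<le> T" shows "T \<le> 2 ^ sched_e T \<and> 2 ^ sched_e T < 2 * T"
proof -
  have ex: "T \<le> 2 ^ T" using less_exp[of T] by simp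
  have a: "T \<le> 2 ^ sched_e T" unfolding sched_e_def by (rule LeastI[of _ T]) (rule ex)
  show ?thesis
  proof (cases "sched_e T")
    case 0 then show ?thesis using a assms by simp
  next
    case (Suc e)
    then have "\<not> T \<le> 2 ^ e" unfolding sched_e_def by (metis Suc_n_not_le_n sched_e_def Least_le)
    then show ?thesis using a Suc by simp
  qed
qed

lemma cong_le: "finite JS \<Longrightarrow> m \<in> M \<Longrightarrow> finite M \<Longrightarrow> (\<Sum>j\<in>JS. count_list (fst j) m) \<le> congestion M JS"
  unfolding congestion_def by (intro Max_ge) auto

lemma dil_le: "finite JS \<Longrightarrow> j \<in> JS \<Longrightarrow> length (fst j) \<le> dilation JS"
  unfolding dilation_def by (intro Max_ge) auto

lemma det_main:
  assumes finM: "finite M" and l1: "sched_l (card M) c \<ge> 1" and SM: "S \<subseteq> lists M"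
    and om: "\<omega> \<in> goodset M c b S" and vJ: "valid_jobs M c S J"
    and \<beta>: "\<beta> \<ge> 1" and T1: "1 \<le> T" and Tn: "T \<le> card M ^ c"
    and gs: "good_subset M \<beta> T J JS" and rn: "noisy_run M c b \<beta> T \<omega> J P"
  shows "4 * card {j\<in>JS. P (noisy_time (card M) c b \<beta> T) j = length (fst j)} \<ge> card JS"
proof (rule ccontr)
  define l where "l = sched_l (card M) c"
  have finJ: "finite J" using vJ unfolding valid_jobs_def by simp
  have seqM: "\<forall>j\<in>J. set (fst j) \<subseteq> M" using vJ SM unfolding valid_jobs_def by blast
  have lp1: "sched_l' (card M) c \<beta> \<ge> 1"
  proof -
    have "real (sched_l (card M) c) \<ge> 1" using l1 by simp
    then have "4 * \<beta> * real (sched_l (card M) c) \<ge> 4 * 1 * 1" using \<beta> by (intro mult_mono) auto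
    then show ?thesis unfolding sched_l'_def by simp
  qed
  interpret R: runctx M c b \<beta> T \<omega> J P using rn finJ seqM lp1 by unfold_locales
  have nt: "noisy_time (card M) c b \<beta> T = R.KK * R.NN"
    unfolding noisy_time_def R.KK_def R.NN_def ..
  define C where "C = {j\<in>JS. P (R.KK * R.NN) j = length (fst j)}"
  define Y where "Y = JS - C"
  assume "\<not> card JS \<le> 4 * card {j\<in>JS. P (noisy_time (card M) c b \<beta> T) j = length (fst j)}"
  then have lt: "4 * card C < card JS" unfolding C_def nt by simp
  have JSJ: "JS \<subseteq> J" using gs unfolding good_subset_def by simp
  have finJS: "finite JS" using finite_subset[OF JSJ finJ] .
  have CJS: "C \<subseteq> JS" unfolding C_def by auto
  have cardY: "card JS = card C + card Y"
    unfolding Y_def using card_Diff_subset[OF finite_subset[OF CJS finJS] CJS] card_mono[OF finJS CJS] by simp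
  have JlJS: "real (card J) \<le> \<beta> * real (card JS)"
    using gs \<beta> unfolding good_subset_def by (simp add: field_simps)
  define e where "e = sched_e T"
  have LLe: "R.LL = 2^e" unfolding R.LL_def e_def ..
  have eb: "T \<le> 2^e" "2^e < 2 * card M ^ c" using sched_e_bounds[OF T1] Tn unfolding e_def by auto
  have g: "\<forall>s<R.KK. \<forall>j\<in>pool M c S. \<omega> (e, s, j) < 2^e"
       "\<not> badE M l R.KK (pool M c S) e (\<lambda>s j. \<omega> (e, s, j))"
    using om eb(2) unfolding goodset_def R.KK_def l_def by auto
  have Jpool: "J \<subseteq> pool M c S" using vJ unfolding valid_jobs_def pool_def by auto
  have cong: "congestion M JS + dilation JS \<le> T" using gs unfolding good_subset_def by simp
  have "badE M l R.KK (pool M c S) e (\<lambda>s j. \<omega> (e, s, j))"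
    unfolding badE_def
  proof (rule exI[of _ Y], intro conjI allI impI ballI)
    show "Y \<subseteq> pool M c S" using Jpool JSJ unfolding Y_def by auto
    show "Y \<noteq> {}" using lt cardY by auto
    fix m assume "m \<in> M"
    have "(\<Sum>j\<in>Y. count_list (fst j) m) \<le> (\<Sum>j\<in>JS. count_list (fst j) m)"
      by (rule sum_mono2[OF finJS]) (auto simp: Y_def)
    also have "\<dots> \<le> congestion M JS" using cong_le[OF finJS \<open>m \<in> M\<close> finM] .
    finally show "(\<Sum>j\<in>Y. count_list (fst j) m) \<le> 2^e" using cong eb by linarith
  next
    fix s assume s: "s < R.KK"
    define F where "F = R.Fs s \<inter> (M \<times> {..<2*2^e})"
    show "\<exists>F. F \<subseteq> M \<times> {..<2*2^e} \<and> 3*l*card F < card Y \<and>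
        (\<forall>j\<in>Y. \<exists>p<length (fst j). (fst j ! p, \<omega> (e, s, j) + p) \<in> F)"
    proof (rule exI[of _ F], intro conjI ballI)
      show "F \<subseteq> M \<times> {..<2*2^e}" unfolding F_def by auto
      have "card F \<le> card (R.Fs s)" unfolding F_def by (rule card_mono[OF R.finite_Fs[OF finM]]) auto
      then have "real (card F) * R.lp \<le> real (card J)" using R.Fs_card[OF finM, of s] R.lp_ge1
        by (smt (verit) mult_right_mono of_nat_le_iff)
      then have "real (card F) * (4 * \<beta> * real l) \<le> \<beta> * real (card JS)"
        using JlJS unfolding R.lp_def sched_l'_def l_def by simp
      then have "\<beta> * (4 * real (card F) * real l) \<le> \<beta> * real (card JS)" by (simp add: algebra_simps)
      then have "4 * real (card F) * real l \<le> real (card JS)" using \<beta> by simp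
      moreover have "4 * real (card C) < real (card JS)" using lt by linarith
      moreover have "real (card JS) = real (card C) + real (card Y)" using cardY by simp
      ultimately have "3 * real l * real (card F) < real (card Y)" by (simp add: algebra_simps)
      then show "3*l*card F < card Y" by (metis of_nat_less_iff of_nat_mult of_nat_numeral)
    next
      fix j assume jY: "j \<in> Y"
      then have jJS: "j \<in> JS" and jJ: "j \<in> J" and nc: "P (R.KK*R.NN) j \<noteq> length (fst j)"
        using JSJ unfolding Y_def C_def by auto
      have hl: "R.hs s j < R.LL" using g(1) s jJ Jpool LLe unfolding R.hs_def e_def by auto
      have ll: "length (fst j) \<le> R.LL" using dil_le[OF finJS jJS] cong eb LLe by linarith
      obtain p where p: "p < length (fst j)" "(fst j ! p, R.hs s j + p) \<in> R.Fs s" "R.hs s j + p < 2*R.LL"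
        using R.uncompleted_cover[OF s jJ nc hl ll] by blast
      have "(fst j ! p, \<omega> (e, s, j) + p) \<in> F" using p LLe unfolding F_def R.hs_def e_def R.Fs_def by auto
      then show "\<exists>p<length (fst j). (fst j ! p, \<omega> (e, s, j) + p) \<in> F" using p(1) by blast
    qed
  qed
  then show False using g(2) by simp
qed

definition Mi :: "nat \<times> nat \<times> job \<Rightarrow> nat measure" where
  "Mi = (\<lambda>(e::nat, i::nat, x::job). measure_pmf (pmf_of_set {0..<(2::nat)^e}))"

lemma rs_eq: "rand_space = PiM UNIV Mi" unfolding rand_space_def Mi_def ..

lemma Mi_prob: "prob_space (Mi z)" unfolding Mi_def by (auto split: prod.splits intro: prob_space_measure_pmf)

lemma Mi_sets[simp]: "sets (Mi z) = UNIV" unfolding Mi_def by (auto split: prod.splits)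
lemma Mi_space[simp]: "space (Mi z) = UNIV" unfolding Mi_def by (auto split: prod.splits)

lemma Mi_measure: "measure (Mi (e, i, x)) A = real (card ({0..<2^e} \<inter> A)) / 2^e"
  unfolding Mi_def using measure_pmf_of_set[of "{0..<(2::nat)^e}" A] by simp

lemma rs_prob: "prob_space rand_space" unfolding rs_eq by (rule prob_space_PiM) (rule Mi_prob)

lemma rs_space[simp]: "space rand_space = UNIV" unfolding rs_eq by (simp add: space_PiM)

definition cyl :: "(nat \<times> nat \<times> job) set \<Rightarrow> (nat \<times> nat \<times> job \<Rightarrow> nat set) \<Rightarrow> rstring set" where
  "cyl Z F = {\<omega>. \<forall>z\<in>Z. \<omega> z \<in> F z}"

lemma cyl_emb: "cyl Z F = prod_emb UNIV Mi Z (PiE Z F)"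
  unfolding cyl_def prod_emb_def by (auto simp: space_PiM)

lemma cyl_sets: "finite Z \<Longrightarrow> cyl Z F \<in> sets rand_space"
  unfolding cyl_emb rs_eq by (rule sets_PiM_I) auto

lemma cyl_measure:
  assumes "finite Z"
  shows "measure rand_space (cyl Z F) = (\<Prod>z\<in>Z. measure (Mi z) (F z))"
proof -
  have "emeasure rand_space (cyl Z F) = (\<Prod>z\<in>Z. emeasure (Mi z) (F z))"
    unfolding cyl_emb rs_eq by (rule emeasure_PiM_emb) (use assms Mi_prob in auto)
  also have "\<dots> = (\<Prod>z\<in>Z. ennreal (measure (Mi z) (F z)))"
  proof (intro prod.cong refl)
    fix z interpret prob_space "Mi z" by (rule Mi_prob)
    show "emeasure (Mi z) (F z) = ennreal (measure (Mi z) (F z))" by (rule emeasure_eq_measure)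
  qed
  also have "\<dots> = ennreal (\<Prod>z\<in>Z. measure (Mi z) (F z))" by (rule prod_ennreal) simp
  finally show ?thesis unfolding measure_def by (simp add: prod_nonneg)
qed

lemma measurable_by_coords:
  assumes fin: "finite X" and resp: "\<And>\<omega> \<omega>'. \<omega> \<in> A \<Longrightarrow> (\<forall>z\<in>X. \<omega>' z = \<omega> z) \<Longrightarrow> \<omega>' \<in> A"
  shows "A \<in> sets rand_space"
proof -
  have eq: "A = (\<Union>v\<in>(\<lambda>\<omega>. restrict \<omega> X) ` A. cyl X (\<lambda>z. {v z}))"
  proof (intro set_eqI iffI)
    fix \<omega> assume "\<omega> \<in> A"
    then show "\<omega> \<in> (\<Union>v\<in>(\<lambda>\<omega>. restrict \<omega> X) ` A. cyl X (\<lambda>z. {v z}))"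
      unfolding cyl_def by (intro UN_I[of "restrict \<omega> X"]) auto
  next
    fix \<omega> assume "\<omega> \<in> (\<Union>v\<in>(\<lambda>\<omega>. restrict \<omega> X) ` A. cyl X (\<lambda>z. {v z}))"
    then obtain \<omega>0 where "\<omega>0 \<in> A" "\<omega> \<in> cyl X (\<lambda>z. {restrict \<omega>0 X z})" by auto
    then show "\<omega> \<in> A" using resp[of \<omega>0 \<omega>] unfolding cyl_def by auto
  qed
  have "countable ((\<lambda>\<omega>. restrict \<omega> X) ` A)"
  proof (rule countable_subset)
    show "(\<lambda>\<omega>. restrict \<omega> X) ` A \<subseteq> PiE X (\<lambda>_. UNIV)" by auto
    show "countable (PiE X (\<lambda>_. UNIV::nat set))" using fin by (intro countable_PiE) auto
  qed
  then show ?thesis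
    by (subst eq) (intro sets.countable_UN' cyl_sets fin; auto intro: cyl_sets[OF fin])
qed

lemma count_list_card: "count_list xs x = card {p. p < length xs \<and> xs ! p = x}"
  unfolding count_list_eq_length_filter length_filter_conv_card by (metis (full_types))

lemma amgm:
  fixes x :: "'a \<Rightarrow> real"
  assumes "finite S" "S \<noteq> {}" "\<And>i. i \<in> S \<Longrightarrow> x i \<ge> 0"
  shows "(\<Prod>i\<in>S. x i) \<le> ((\<Sum>i\<in>S. x i) / card S) ^ card S"
proof -
  have cS: "card S > 0" using assms by (simp add: card_gt_0_iff)
  have p0: "(\<Prod>i\<in>S. x i) \<ge> 0" using assms by (simp add: prod_nonneg)
  have a: "(\<Prod>i\<in>S. x i) powr (1 / card S) \<le> (\<Sum>i\<in>S. x i) / card S"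
    using arith_geom_mean[OF assms] by (simp add: sum_divide_distrib)
  show ?thesis
  proof (cases "(\<Prod>i\<in>S. x i) = 0")
    case True
    have "0 \<le> ((\<Sum>i\<in>S. x i) / card S) ^ card S"
      by (intro zero_le_power divide_nonneg_nonneg sum_nonneg) (use assms in auto)
    then show ?thesis using True by simp
  next
    case False
    then have pp: "(\<Prod>i\<in>S. x i) > 0" using p0 by simp
    have "((\<Prod>i\<in>S. x i) powr (1 / card S)) ^ card S = (\<Prod>i\<in>S. x i)"
      using pp cS by (simp add: powr_realpow[symmetric] powr_powr)
    moreover have "((\<Prod>i\<in>S. x i) powr (1 / card S)) ^ card S \<le> ((\<Sum>i\<in>S. x i) / card S) ^ card S"
      by (rule power_mono[OF a]) simp
    ultimately show ?thesis by simp
  qed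
qed

lemma card_small_subsets:
  assumes "finite A"
  shows "card {F. F \<subseteq> A \<and> card F \<le> z} \<le> (card A + 1) ^ z"
proof -
  define G where "G f = {a. Some a \<in> f ` {..<z}}" for f :: "nat \<Rightarrow> 'a option"
  have sub: "{F. F \<subseteq> A \<and> card F \<le> z} \<subseteq> G ` (PiE {..<z} (\<lambda>_. insert None (Some ` A)))"
  proof
    fix F assume F: "F \<in> {F. F \<subseteq> A \<and> card F \<le> z}"
    then have fF: "finite F" using assms finite_subset by blast
    obtain xs where xs: "set xs = F" "distinct xs" using finite_distinct_list[OF fF] by blast
    have lxs: "length xs \<le> z" using F xs distinct_card by fastforce
    define f where "f = (\<lambda>i\<in>{..<z}. if i < length xs then Some (xs ! i) else None)"
    have xA: "\<forall>i<length xs. xs ! i \<in> A" using F xs nth_mem by blast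
    have "f \<in> PiE {..<z} (\<lambda>_. insert None (Some ` A))"
      unfolding f_def using xA by auto
    moreover have "G f = F"
    proof (intro set_eqI iffI)
      fix a assume "a \<in> G f"
      then obtain i where "i < z" "f i = Some a" unfolding G_def by auto
      then show "a \<in> F" unfolding f_def using xs by (auto split: if_splits simp: nth_mem)
    next
      fix a assume "a \<in> F"
      then obtain i where "i < length xs" "xs ! i = a" using xs by (metis in_set_conv_nth)
      then show "a \<in> G f" unfolding G_def f_def using lxs by (intro CollectI image_eqI[of _ _ i]) auto
    qed
    ultimately show "F \<in> G ` (PiE {..<z} (\<lambda>_. insert None (Some ` A)))" by blast
  qed
  have "card {F. F \<subseteq> A \<and> card F \<le> z} \<le> card (G ` (PiE {..<z} (\<lambda>_. insert None (Some ` A))))"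
    by (rule card_mono[OF _ sub]) (use assms in \<open>auto intro!: finite_PiE\<close>)
  also have "\<dots> \<le> card (PiE {..<z} (\<lambda>_. insert None (Some ` A)))" by (rule card_image_le) (use assms in \<open>auto intro!: finite_PiE\<close>)
  also have "\<dots> = (card A + 1) ^ z" using assms by (simp add: card_PiE card_insert_if card_image)
  finally show ?thesis .
qed

lemma sum_pow_subsets:
  fixes r :: real
  assumes "finite A"
  shows "(\<Sum>Y\<in>Pow A. r ^ card Y) = (1 + r) ^ card A"
proof -
  have "(\<Prod>x\<in>A. r + 1) = (\<Sum>X\<in>Pow A. (\<Prod>x\<in>X. r) * (\<Prod>x\<in>A-X. 1))" by (rule prod_add[OF assms])
  then show ?thesis by (simp add: add.commute)
qed

definition Bj :: "job \<Rightarrow> (nat \<times> nat) set \<Rightarrow> nat set" where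
  "Bj j F = {v. \<exists>p<length (fst j). (fst j ! p, v + p) \<in> F}"

lemma Bj_card:
  assumes "finite F"
  shows "card ({0..<L} \<inter> Bj j F) \<le> (\<Sum>\<sigma>\<in>F. count_list (fst j) (fst \<sigma>))"
proof -
  have "{0..<L} \<inter> Bj j F \<subseteq> (\<Union>\<sigma>\<in>F. (\<lambda>p. snd \<sigma> - p) ` {p. p < length (fst j) \<and> fst j ! p = fst \<sigma>})"
  proof
    fix v assume "v \<in> {0..<L} \<inter> Bj j F"
    then obtain p where p: "p < length (fst j)" "(fst j ! p, v + p) \<in> F" unfolding Bj_def by auto
    then show "v \<in> (\<Union>\<sigma>\<in>F. (\<lambda>p. snd \<sigma> - p) ` {p. p < length (fst j) \<and> fst j ! p = fst \<sigma>})"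
      by (intro UN_I[OF p(2)]) (auto intro!: image_eqI[of _ _ p])
  qed
  then have "card ({0..<L} \<inter> Bj j F) \<le> card (\<Union>\<sigma>\<in>F. (\<lambda>p. snd \<sigma> - p) ` {p. p < length (fst j) \<and> fst j ! p = fst \<sigma>})"
    by (rule card_mono[rotated]) (use assms in auto)
  also have "\<dots> \<le> (\<Sum>\<sigma>\<in>F. card ((\<lambda>p. snd \<sigma> - p) ` {p. p < length (fst j) \<and> fst j ! p = fst \<sigma>}))"
    by (rule card_UN_le[OF assms])
  also have "\<dots> \<le> (\<Sum>\<sigma>\<in>F. count_list (fst j) (fst \<sigma>))"
    by (intro sum_mono) (simp add: count_list_card card_image_le)
  finally show ?thesis .
qed

lemma comb:
  assumes finY: "finite Y" and Yne: "Y \<noteq> {}" and cong: "\<forall>m\<in>M. (\<Sum>j\<in>Y. count_list (fst j) m) \<le> L"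
    and L1: "L \<ge> 1" and FM: "F \<subseteq> M \<times> UNIV" and finF: "finite F"
    and small: "3 * l * card F < card Y" and l1: "l \<ge> 1"
  shows "(\<Prod>j\<in>Y. real (card ({0..<L} \<inter> Bj j F)) / L) \<le> (1 / (3 * real l)) ^ card Y"
proof -
  define x where "x j = real (card ({0..<L} \<inter> Bj j F))" for j
  have x0: "\<And>j. x j \<ge> 0" unfolding x_def by simp
  have "(\<Sum>j\<in>Y. x j) \<le> (\<Sum>j\<in>Y. real (\<Sum>\<sigma>\<in>F. count_list (fst j) (fst \<sigma>)))"
    unfolding x_def by (intro sum_mono) (metis Bj_card[OF finF] of_nat_le_iff of_nat_sum)
  also have "\<dots> = (\<Sum>\<sigma>\<in>F. real (\<Sum>j\<in>Y. count_list (fst j) (fst \<sigma>)))"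
    by (simp add: sum.swap[of _ Y F])
  also have "\<dots> \<le> (\<Sum>\<sigma>\<in>F. real L)"
  proof (intro sum_mono)
    fix \<sigma> assume "\<sigma> \<in> F"
    then have "fst \<sigma> \<in> M" using FM by auto
    then have "(\<Sum>j\<in>Y. count_list (fst j) (fst \<sigma>)) \<le> L" using cong by blast
    then show "real (\<Sum>j\<in>Y. count_list (fst j) (fst \<sigma>)) \<le> real L" by linarith
  qed
  finally have sx: "(\<Sum>j\<in>Y. x j) \<le> real (card F) * real L" by simp
  have cY: "real (card Y) > 0" using finY Yne by (simp add: card_gt_0_iff)
  have "(\<Prod>j\<in>Y. x j) \<le> ((\<Sum>j\<in>Y. x j) / card Y) ^ card Y" by (rule amgm[OF finY Yne x0])
  also have "\<dots> \<le> (real (card F) * real L / card Y) ^ card Y"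
    by (rule power_mono) (use sx cY x0 in \<open>auto simp: divide_right_mono sum_nonneg\<close>)
  finally have pr: "(\<Prod>j\<in>Y. x j) \<le> (real (card F) * real L / card Y) ^ card Y" .
  have "(\<Prod>j\<in>Y. x j / L) = (\<Prod>j\<in>Y. x j) / real L ^ card Y" by (simp add: prod_dividef)
  also have "\<dots> \<le> (real (card F) * real L / card Y) ^ card Y / real L ^ card Y"
    by (rule divide_right_mono[OF pr]) simp
  also have "\<dots> = (real (card F) / card Y) ^ card Y" using L1 by (simp add: power_divide power_mult_distrib)
  also have "\<dots> \<le> (1 / (3 * real l)) ^ card Y"
  proof (rule power_mono)
    have "3 * real l * real (card F) < real (card Y)" using small by (metis of_nat_less_iff of_nat_mult of_nat_numeral)
    moreover have "l > 0" using l1 by simp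
    ultimately show "real (card F) / real (card Y) \<le> 1 / (3 * real l)" using cY
      by (simp add: field_simps)
  qed simp
  finally show ?thesis unfolding x_def .
qed

lemma badE_transfer:
  assumes "badE M l K pl e w" "\<forall>s<K. \<forall>j\<in>pl. w s j = w' s j"
  shows "badE M l K pl e w'"
proof -
  from assms(1) obtain Y where Y: "Y \<subseteq> pl" "Y \<noteq> {}" "\<forall>m\<in>M. (\<Sum>j\<in>Y. count_list (fst j) m) \<le> 2^e"
    "\<forall>s<K. \<exists>F. F \<subseteq> M \<times> {..<2*2^e} \<and> 3*l*card F < card Y \<and>
        (\<forall>j\<in>Y. \<exists>p<length (fst j). (fst j ! p, w s j + p) \<in> F)" unfolding badE_def by blast
  have "\<forall>s<K. \<exists>F. F \<subseteq> M \<times> {..<2*2^e} \<and> 3*l*card F < card Y \<and>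
        (\<forall>j\<in>Y. \<exists>p<length (fst j). (fst j ! p, w' s j + p) \<in> F)"
  proof (intro allI impI)
    fix s assume s: "s < K"
    then obtain F where F: "F \<subseteq> M \<times> {..<2*2^e}" "3*l*card F < card Y"
        "\<forall>j\<in>Y. \<exists>p<length (fst j). (fst j ! p, w s j + p) \<in> F" using Y(4) by blast
    have "\<forall>j\<in>Y. \<exists>p<length (fst j). (fst j ! p, w' s j + p) \<in> F"
      using F(3) assms(2) s Y(1) by (metis subsetD)
    then show "\<exists>F. F \<subseteq> M \<times> {..<2*2^e} \<and> 3*l*card F < card Y \<and>
        (\<forall>j\<in>Y. \<exists>p<length (fst j). (fst j ! p, w' s j + p) \<in> F)" using F by blast
  qed
  then show ?thesis unfolding badE_def using Y by blast
qed

lemma pool_finite: "finite S \<Longrightarrow> finite (pool M c S)" unfolding pool_def by simp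

lemma goodset_sets:
  assumes "finite S"
  shows "goodset M c b S \<in> sets rand_space"
proof (rule measurable_by_coords)
  let ?E = "{e::nat. 2^e < 2*card M^c}"
  have fE: "finite ?E"
  proof (rule finite_subset)
    show "?E \<subseteq> {..<2*card M^c}" by (auto intro: less_trans[OF less_exp])
  qed simp
  show "finite (?E \<times> {..<sched_k (card M) c b} \<times> pool M c S)"
    using fE pool_finite[OF assms] by simp
  fix \<omega> \<omega>' assume om: "\<omega> \<in> goodset M c b S"
    and ag: "\<forall>z\<in>?E \<times> {..<sched_k (card M) c b} \<times> pool M c S. \<omega>' z = \<omega> z"
  show "\<omega>' \<in> goodset M c b S" unfolding goodset_def
  proof (intro CollectI allI impI conjI ballI notI)
    fix e s j assume e: "2^e < 2*card M^c" and s: "s < sched_k (card M) c b" and j: "j \<in> pool M c S"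
    then show "\<omega>' (e, s, j) < 2^e" using om ag unfolding goodset_def by auto
  next
    fix e assume e: "2^e < 2*card M^c"
      and b: "badE M (sched_l (card M) c) (sched_k (card M) c b) (pool M c S) e (\<lambda>s j. \<omega>' (e, s, j))"
    have "badE M (sched_l (card M) c) (sched_k (card M) c b) (pool M c S) e (\<lambda>s j. \<omega> (e, s, j))"
      by (rule badE_transfer[OF b]) (use ag e in auto)
    then show False using om e unfolding goodset_def by auto
  qed
qed

lemma prod_single_Sigma:
  "finite B \<Longrightarrow> finite Y \<Longrightarrow> (\<Prod>z\<in>{e} \<times> B \<times> Y. f z) = (\<Prod>s\<in>B. \<Prod>j\<in>Y. f (e, s, j))"
proof -
  assume fin: "finite B" "finite Y"
  have "{e} \<times> B \<times> Y = Pair e ` (B \<times> Y)" by auto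
  then have "(\<Prod>z\<in>{e} \<times> B \<times> Y. f z) = (\<Prod>x\<in>B \<times> Y. f (e, x))"
    by (simp add: prod.reindex inj_on_def)
  also have "\<dots> = (\<Prod>s\<in>B. \<Prod>j\<in>Y. f (e, s, j))" by (simp add: prod.cartesian_product)
  finally show ?thesis .
qed

lemma bad_bound:
  fixes b :: real
  assumes finM: "finite M" and finS: "finite S" and l1: "sched_l (card M) c \<ge> 1"
  defines "l \<equiv> sched_l (card M) c" and "K \<equiv> sched_k (card M) c b" and "pl \<equiv> pool M c S"
    and "E \<equiv> {e::nat. 2^e < 2*card M^c}"
  shows "measure rand_space (UNIV - goodset M c b S) \<le>
    (\<Sum>e\<in>E. \<Sum>Y\<in>{Y. Y \<subseteq> pl \<and> Y \<noteq> {}}.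
        (real ((card (M \<times> {..<2*2^e::nat}) + 1) ^ ((card Y - 1) div (3*l))) * (1/(3*real l))^card Y)^K)"
proof -
  interpret P: prob_space rand_space by (rule rs_prob)
  have finpl: "finite pl" unfolding pl_def using pool_finite[OF finS] .
  have fE: "finite E" unfolding E_def
  proof (rule finite_subset)
    show "{e::nat. 2^e < 2*card M^c} \<subseteq> {..<2*card M^c}" by (auto intro: less_trans[OF less_exp])
  qed simp
  define Cov where "Cov e Y = {F. F \<subseteq> M \<times> {..<2*2^e::nat} \<and> 3*l*card F < card Y}" for e :: nat and Y :: "job set"
  define YS where "YS e = {Y. Y \<subseteq> pl \<and> Y \<noteq> {} \<and> (\<forall>m\<in>M. (\<Sum>j\<in>Y. count_list (fst j) m) \<le> 2^e)}" for e :: nat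
  define Out where "Out e = (\<Union>z\<in>{e}\<times>{..<K}\<times>pl. cyl {z} (\<lambda>_. {2^e..}))" for e :: nat
  define CY where "CY e Y Fv = cyl ({e}\<times>{..<K}\<times>Y) (\<lambda>z. Bj (snd (snd z)) (Fv (fst (snd z))))"
    for e :: nat and Y and Fv :: "nat \<Rightarrow> (nat \<times> nat) set"
  define Bad where "Bad e = (\<Union>Y\<in>YS e. \<Union>Fv\<in>PiE {..<K} (\<lambda>_. Cov e Y). CY e Y Fv)" for e
  have finCov: "finite (Cov e Y)" for e Y
    by (rule finite_subset[of _ "Pow (M \<times> {..<2*2^e::nat})"]) (use finM in \<open>auto simp: Cov_def\<close>)
  have finYS: "finite (YS e)" for e
    by (rule finite_subset[of _ "Pow pl"]) (use finpl in \<open>auto simp: YS_def\<close>)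
  have YSfin: "Y \<in> YS e \<Longrightarrow> finite Y" for Y e using finpl finite_subset unfolding YS_def by blast
  have sOut: "Out e \<in> sets rand_space" for e
    unfolding Out_def by (intro sets.finite_UN cyl_sets) (use finpl in auto)
  have sCY: "Y \<in> YS e \<Longrightarrow> CY e Y Fv \<in> sets rand_space" for e Y Fv
    unfolding CY_def by (intro cyl_sets) (use YSfin in auto)
  have sBad: "Bad e \<in> sets rand_space" for e
    unfolding Bad_def by (intro sets.finite_UN finite_PiE finYS finCov sCY) auto
  have sub: "UNIV - goodset M c b S \<subseteq> (\<Union>e\<in>E. Out e \<union> Bad e)"
  proof
    fix \<omega> assume "\<omega> \<in> UNIV - goodset M c b S"
    then obtain e where e: "e \<in> E" and
      or: "\<not> (\<forall>s<K. \<forall>j\<in>pl. \<omega> (e, s, j) < 2^e) \<or> badE M l K pl e (\<lambda>s j. \<omega> (e, s, j))"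
      unfolding goodset_def E_def l_def K_def pl_def by auto
    then consider (o) "\<not> (\<forall>s<K. \<forall>j\<in>pl. \<omega> (e, s, j) < 2^e)" | (b) "badE M l K pl e (\<lambda>s j. \<omega> (e, s, j))" by blast
    then show "\<omega> \<in> (\<Union>e\<in>E. Out e \<union> Bad e)"
    proof cases
      case o
      then obtain s j where "s < K" "j \<in> pl" "\<omega> (e, s, j) \<ge> 2^e" by auto
      then have "\<omega> \<in> Out e" unfolding Out_def cyl_def by auto
      then show ?thesis using e by blast
    next
      case b
      then obtain Y where Y: "Y \<subseteq> pl" "Y \<noteq> {}" "\<forall>m\<in>M. (\<Sum>j\<in>Y. count_list (fst j) m) \<le> 2^e"
        "\<forall>s<K. \<exists>F. F \<subseteq> M \<times> {..<2*2^e::nat} \<and> 3*l*card F < card Y \<and>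
          (\<forall>j\<in>Y. \<exists>p<length (fst j). (fst j ! p, \<omega> (e, s, j) + p) \<in> F)" unfolding badE_def by blast
      then obtain Fv where Fv: "\<forall>s<K. Fv s \<subseteq> M \<times> {..<2*2^e::nat} \<and> 3*l*card (Fv s) < card Y \<and>
          (\<forall>j\<in>Y. \<exists>p<length (fst j). (fst j ! p, \<omega> (e, s, j) + p) \<in> Fv s)" by metis
      have YY: "Y \<in> YS e" unfolding YS_def using Y by blast
      have FF: "restrict Fv {..<K} \<in> PiE {..<K} (\<lambda>_. Cov e Y)" unfolding Cov_def using Fv by auto
      have "\<omega> \<in> CY e Y (restrict Fv {..<K})" unfolding CY_def cyl_def Bj_def using Fv by auto
      then have "\<omega> \<in> Bad e" unfolding Bad_def using YY FF by blast
      then show ?thesis using e by blast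
    qed
  qed
  have "measure rand_space (UNIV - goodset M c b S) \<le> measure rand_space (\<Union>e\<in>E. Out e \<union> Bad e)"
    by (rule P.finite_measure_mono[OF sub]) (use fE sOut sBad in auto)
  also have "\<dots> \<le> (\<Sum>e\<in>E. measure rand_space (Out e \<union> Bad e))"
    by (rule measure_UNION_le[OF fE]) (use sOut sBad in auto)
  also have "\<dots> \<le> (\<Sum>e\<in>E. measure rand_space (Out e) + measure rand_space (Bad e))"
    by (intro sum_mono measure_Un_le sOut sBad)
  also have "\<dots> \<le> (\<Sum>e\<in>E. \<Sum>Y\<in>{Y. Y \<subseteq> pl \<and> Y \<noteq> {}}.
        (real ((card (M \<times> {..<2*2^e::nat}) + 1) ^ ((card Y - 1) div (3*l))) * (1/(3*real l))^card Y)^K)"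
  proof (intro sum_mono)
    fix e assume "e \<in> E"
    have mOut: "measure rand_space (Out e) \<le> 0"
    proof -
      have "measure rand_space (Out e) \<le> (\<Sum>z\<in>{e}\<times>{..<K}\<times>pl. measure rand_space (cyl {z} (\<lambda>_. {2^e..})))"
        unfolding Out_def by (rule measure_UNION_le) (use finpl cyl_sets in auto)
      also have "\<dots> = 0"
      proof (intro sum.neutral ballI)
        fix z assume "z \<in> {e}\<times>{..<K}\<times>pl"
        then obtain s j where z: "z = (e, s, j)" by auto
        have "{0..<(2::nat)^e} \<inter> {2^e..} = {}" by auto
        then show "measure rand_space (cyl {z} (\<lambda>_. {2^e..})) = 0"
          by (simp add: cyl_measure z Mi_measure)
      qed
      finally show ?thesis .
    qed
    have mBad: "measure rand_space (Bad e) \<le> (\<Sum>Y\<in>{Y. Y \<subseteq> pl \<and> Y \<noteq> {}}.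
        (real ((card (M \<times> {..<2*2^e::nat}) + 1) ^ ((card Y - 1) div (3*l))) * (1/(3*real l))^card Y)^K)"
    proof -
      define Bd where "Bd Y = (real ((card (M \<times> {..<2*2^e::nat}) + 1) ^ ((card Y - 1) div (3*l))) * (1/(3*real l))^card Y)^K" for Y :: "job set"
      have Bd0: "Bd Y \<ge> 0" for Y unfolding Bd_def by simp
      have perY: "measure rand_space (\<Union>Fv\<in>PiE {..<K} (\<lambda>_. Cov e Y). CY e Y Fv) \<le> Bd Y" if Y: "Y \<in> YS e" for Y
      proof -
        have finY: "finite Y" using YSfin[OF Y] .
        have Yne: "Y \<noteq> {}" and congY: "\<forall>m\<in>M. (\<Sum>j\<in>Y. count_list (fst j) m) \<le> 2^e" using Y unfolding YS_def by auto
        define G where "G F = (\<Prod>j\<in>Y. real (card ({0..<2^e} \<inter> Bj j F)) / 2^e)" for F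
        have mCY: "measure rand_space (CY e Y Fv) = (\<Prod>s<K. G (Fv s))" for Fv
          unfolding CY_def G_def
          by (subst cyl_measure) (use finY in \<open>auto simp: prod_single_Sigma Mi_measure\<close>)
        have "measure rand_space (\<Union>Fv\<in>PiE {..<K} (\<lambda>_. Cov e Y). CY e Y Fv)
              \<le> (\<Sum>Fv\<in>PiE {..<K} (\<lambda>_. Cov e Y). measure rand_space (CY e Y Fv))"
          by (rule measure_UNION_le) (use finCov sCY[OF Y] in \<open>auto intro!: finite_PiE\<close>)
        also have "\<dots> = (\<Sum>Fv\<in>PiE {..<K} (\<lambda>_. Cov e Y). \<Prod>s<K. G (Fv s))" by (simp add: mCY)
        also have "\<dots> = (\<Prod>s<K. \<Sum>F\<in>Cov e Y. G F)"
          by (rule prod_sum_PiE[symmetric]) (use finCov in auto)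
        also have "\<dots> = (\<Sum>F\<in>Cov e Y. G F) ^ K" by simp
        also have "\<dots> \<le> (real ((card (M \<times> {..<2*2^e::nat}) + 1) ^ ((card Y - 1) div (3*l))) * (1/(3*real l))^card Y)^K"
        proof (rule power_mono)
          show "0 \<le> (\<Sum>F\<in>Cov e Y. G F)" unfolding G_def by (intro sum_nonneg prod_nonneg) auto
          have "(\<Sum>F\<in>Cov e Y. G F) \<le> (\<Sum>F\<in>Cov e Y. (1/(3*real l))^card Y)"
          proof (intro sum_mono)
            fix F assume F: "F \<in> Cov e Y"
            have "finite F" using F finM unfolding Cov_def by (auto intro: finite_subset)
            then show "G F \<le> (1/(3*real l))^card Y" unfolding G_def
              using comb[OF finY Yne _ _ _ _ _ l1[folded l_def], of M "2^e" F] congY F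
              unfolding Cov_def by auto
          qed
          also have "\<dots> = real (card (Cov e Y)) * (1/(3*real l))^card Y" by simp
          also have "\<dots> \<le> real ((card (M \<times> {..<2*2^e::nat}) + 1) ^ ((card Y - 1) div (3*l))) * (1/(3*real l))^card Y"
          proof (rule mult_right_mono)
            have "Cov e Y \<subseteq> {F. F \<subseteq> M \<times> {..<2*2^e::nat} \<and> card F \<le> (card Y - 1) div (3*l)}"
            proof
              fix F assume "F \<in> Cov e Y"
              then have F: "F \<subseteq> M \<times> {..<2*2^e::nat}" "3*l*card F < card Y" unfolding Cov_def by auto
              have "card F = (3*l*card F) div (3*l)" using l1 unfolding l_def by simp
              also have "\<dots> \<le> (card Y - 1) div (3*l)" using F(2) by (intro div_le_mono) simp
              finally show "F \<in> {F. F \<subseteq> M \<times> {..<2*2^e::nat} \<and> card F \<le> (card Y - 1) div (3*l)}" using F by simp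
            qed
            then have "card (Cov e Y) \<le> card {F. F \<subseteq> M \<times> {..<2*2^e::nat} \<and> card F \<le> (card Y - 1) div (3*l)}"
              by (rule card_mono[rotated]) (use finM in \<open>auto intro: finite_subset[of _ "Pow (M \<times> {..<2*2^e::nat})"]\<close>)
            also have "\<dots> \<le> (card (M \<times> {..<2*2^e::nat}) + 1) ^ ((card Y - 1) div (3*l))"
              by (rule card_small_subsets) (use finM in simp)
            finally show "real (card (Cov e Y)) \<le> real ((card (M \<times> {..<2*2^e::nat}) + 1) ^ ((card Y - 1) div (3*l)))"
              by linarith
          qed simp
          finally show "(\<Sum>F\<in>Cov e Y. G F) \<le> real ((card (M \<times> {..<2*2^e::nat}) + 1) ^ ((card Y - 1) div (3*l))) * (1/(3*real l))^card Y" .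
        qed
        finally show ?thesis unfolding Bd_def .
      qed
      have "measure rand_space (Bad e) \<le> (\<Sum>Y\<in>YS e. measure rand_space (\<Union>Fv\<in>PiE {..<K} (\<lambda>_. Cov e Y). CY e Y Fv))"
        unfolding Bad_def
        by (rule measure_UNION_le[OF finYS]) (use finCov sCY in \<open>auto intro!: sets.finite_UN finite_PiE\<close>)
      also have "\<dots> \<le> (\<Sum>Y\<in>YS e. Bd Y)" by (intro sum_mono perY)
      also have "\<dots> \<le> (\<Sum>Y\<in>{Y. Y \<subseteq> pl \<and> Y \<noteq> {}}. Bd Y)"
        by (rule sum_mono2) (use finpl Bd0 in \<open>auto simp: YS_def intro: finite_subset[of _ "Pow pl"]\<close>)
      finally show ?thesis unfolding Bd_def .
    qed
    show "measure rand_space (Out e) + measure rand_space (Bad e) \<le> (\<Sum>Y\<in>{Y. Y \<subseteq> pl \<and> Y \<noteq> {}}.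
        (real ((card (M \<times> {..<2*2^e::nat}) + 1) ^ ((card Y - 1) div (3*l))) * (1/(3*real l))^card Y)^K)"
      using mOut mBad by linarith
  qed
  finally show ?thesis .
qed

lemma exp3: "exp (3::real) \<le> 27"
proof -
  have "exp (3::real) = exp 1 ^ 3" using exp_of_nat_mult[of 3 "1::real"] by simp
  also have "\<dots> \<le> 3 ^ 3" by (rule power_mono[OF exp_le]) simp
  finally show ?thesis by simp
qed

lemma ln_ge_of_exp: "exp a \<le> (y::real) \<Longrightarrow> a \<le> ln y"
proof -
  assume a: "exp a \<le> y"
  have "y > 0" using a exp_gt_zero[of a] by linarith
  then have "ln (exp a) \<le> ln y" using a by (subst ln_le_cancel_iff) auto
  then show ?thesis by simp
qed

lemma params:
  fixes n c :: nat and x :: real and l :: nat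
  assumes n: "n \<ge> 32" and c: "c \<ge> 1"
  defines "x \<equiv> ln (real n)" and "l \<equiv> sched_l n c"
  shows "x \<ge> 3" "ln x \<ge> 1" "real l \<ge> 150 * c * x / ln x" "ln (real l) \<ge> ln x / 2"
    "real l \<le> 151 * c * x" "l \<ge> 1" "real l * ln (real l) \<ge> 75 * c * x"
proof -
  have "exp 3 \<le> real n" using exp3 n by simp
  then show x3: "x \<ge> 3" unfolding x_def by (rule ln_ge_of_exp)
  have "exp 1 \<le> x" using exp_le x3 by linarith
  then show y1: "ln x \<ge> 1" by (rule ln_ge_of_exp)
  have x0: "x > 0" using x3 by simp
  have q0: "150 * real c * x / ln x \<ge> 0" using x3 y1 by (intro divide_nonneg_nonneg mult_nonneg_nonneg) auto
  have lr: "real l = real_of_int \<lceil>150 * real c * x / ln x\<rceil>"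
  proof -
    have "\<lceil>150 * real c * x / ln x\<rceil> \<ge> 0" using q0 by simp
    then show ?thesis unfolding l_def sched_l_def x_def by simp
  qed
  show lb: "real l \<ge> 150 * c * x / ln x" using lr le_of_int_ceiling by simp
  have ub0: "real l \<le> 150 * c * x / ln x + 1" using lr ceiling_correct[of "150 * real c * x / ln x"] by linarith
  have "150 * real c * x / ln x \<le> 150 * real c * x / 1"
    by (rule divide_left_mono) (use x0 x3 y1 in auto)
  moreover have "1 \<le> real c * x"
  proof -
    have "real c \<ge> 1" using c by simp
    then have "1 * 1 \<le> real c * x" using x3 by (intro mult_mono) auto
    then show ?thesis by simp
  qed
  ultimately show "real l \<le> 151 * c * x" using ub0 by simp
  have sx: "sqrt x > 0" using x0 by simp
  have sq: "ln x \<le> 2 * sqrt x"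
  proof -
    have "ln (sqrt x) \<le> sqrt x - 1" using sx by (intro ln_le_minus_one)
    moreover have "ln (sqrt x) = ln x / 2" using x0 by (intro ln_sqrt) simp
    ultimately show ?thesis by simp
  qed
  have "150 * x / (2 * sqrt x) \<le> 150 * x / ln x" using sq y1 x0 x3 by (intro divide_left_mono) auto
  also have "\<dots> \<le> 150 * real c * x / ln x"
    by (rule divide_right_mono) (use c x0 x3 y1 in auto)
  finally have a1: "150 * x / (2 * sqrt x) \<le> 150 * real c * x / ln x" .
  have "sqrt x * sqrt x = x" using x0 by simp
  then have "150 * x / (2 * sqrt x) = 75 * sqrt x" using sx by (simp add: field_simps)
  then have lsq: "real l \<ge> sqrt x" using lb a1 sx by linarith
  then have "ln (real l) \<ge> ln (sqrt x)" using sx by (intro ln_mono) auto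
  moreover have "ln (sqrt x) = ln x / 2" using x0 by (intro ln_sqrt) simp
  ultimately show ll: "ln (real l) \<ge> ln x / 2" by simp
  have "sqrt x \<ge> 1" using x3 by simp
  then have "real l \<ge> 1" using lsq by linarith
  then show "l \<ge> 1" by simp
  have "real l * ln (real l) \<ge> (150 * c * x / ln x) * (ln x / 2)"
    by (rule mult_mono[OF lb ll]) (use x0 x3 y1 lsq in auto)
  also have "(150 * c * x / ln x) * (ln x / 2) = 75 * c * x" using y1 x3 by (simp add: field_simps)
  finally show "real l * ln (real l) \<ge> 75 * c * x" .
qed

lemma q_bound:
  fixes n c :: nat and b :: real
  assumes n: "n \<ge> 32" and c: "c \<ge> 1" and b: "b \<ge> 0"
  defines "l \<equiv> sched_l n c" and "K \<equiv> sched_k n c b"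
  defines "q \<equiv> real n powr ((real c + 2) / (3 * real l)) / (3 * real l)"
  shows "q \<ge> 0" "q ^ K \<le> real n powr (- (4 * (b + 1) * (2 * real c + 1)))"
proof -
  define x where "x = ln (real n)"
  note P = params[OF n c, folded x_def l_def]
  have x0: "x > 0" using P(1) by simp
  have l1: "real l \<ge> 1" using P(6) by simp
  have lnl: "ln (real l) > 0" using P(2,4) by linarith
  show q0: "q \<ge> 0" unfolding q_def by simp
  have "(real c + 2) * x \<le> 3 * real c * x" using c x0 by (simp add: mult_right_mono)
  also have "\<dots> \<le> 3 * (real l * ln (real l) / 75)" using P(7) by simp
  also have "\<dots> \<le> (3 * real l) * (ln (real l) / 2)" using l1 lnl by simp
  finally have e1: "(real c + 2) / (3 * real l) * x \<le> ln (real l) / 2" using l1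
    by (simp add: field_simps)
  have "q = exp ((real c + 2) / (3 * real l) * x) / (3 * real l)"
    unfolding q_def x_def powr_def using n by simp
  also have "\<dots> \<le> exp (ln (real l) / 2) / (3 * real l)"
    by (rule divide_right_mono) (use e1 l1 in auto)
  also have "\<dots> \<le> exp (ln (real l) / 2) / real l"
    by (rule divide_left_mono) (use l1 in auto)
  also have "\<dots> = exp (- (ln (real l) / 2))"
  proof -
    have "exp (ln (real l) / 2) = exp (- (ln (real l) / 2)) * exp (ln (real l))"
      by (simp add: exp_add[symmetric])
    then show ?thesis using l1 by simp
  qed
  finally have qb: "q \<le> exp (- (ln (real l) / 2))" .
  have "q ^ K \<le> exp (- (ln (real l) / 2)) ^ K" by (rule power_mono[OF qb q0])
  also have "\<dots> = exp (real K * (- (ln (real l) / 2)))" by (rule exp_of_nat_mult[symmetric])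
  also have "\<dots> \<le> exp (- (4 * (b + 1) * (2 * real c + 1)) * x)"
  proof -
    have "real K \<ge> 8 * (b + 1) * (2 * real c + 1) * x / ln (real l)"
    proof -
      have "real K = real (nat \<lceil>8 * (b + 1) * (2 * real c + 1) * x / ln (real l)\<rceil>)"
        unfolding K_def sched_k_def x_def l_def ..
      also have "\<dots> \<ge> 8 * (b + 1) * (2 * real c + 1) * x / ln (real l)"
      proof -
        define v where "v = 8 * (b + 1) * (2 * real c + 1) * x / ln (real l)"
        have "v \<le> real_of_int \<lceil>v\<rceil>" by (rule le_of_int_ceiling)
        also have "\<dots> \<le> real (nat \<lceil>v\<rceil>)" by (cases "\<lceil>v\<rceil> \<ge> 0") auto
        finally show ?thesis unfolding v_def .
      qed
      finally show ?thesis .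
    qed
    then have "real K * ln (real l) \<ge> 8 * (b + 1) * (2 * real c + 1) * x"
      using lnl by (simp add: divide_le_eq)
    moreover have "- (4 * (b + 1) * (2 * real c + 1)) * x = - ((8 * (b + 1) * (2 * real c + 1) * x) / 2)"
      by (simp add: algebra_simps)
    moreover have "real K * (- (ln (real l) / 2)) = - ((real K * ln (real l)) / 2)" by simp
    ultimately have "real K * (- (ln (real l) / 2)) \<le> - (4 * (b + 1) * (2 * real c + 1)) * x" by linarith
    then show ?thesis by simp
  qed
  also have "\<dots> = real n powr (- (4 * (b + 1) * (2 * real c + 1)))"
    unfolding powr_def x_def using n by (simp add: mult.commute)
  finally show "q ^ K \<le> real n powr (- (4 * (b + 1) * (2 * real c + 1)))" .
qed

lemma term_bound:
  fixes n c l :: nat and Ae1 y :: nat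
  assumes n: "n \<ge> 1" and l: "l \<ge> 1" and A: "Ae1 \<le> n ^ (c + 2)"
  shows "real (Ae1 ^ ((y - 1) div (3*l))) * (1/(3*real l))^y \<le>
         (real n powr ((real c + 2) / (3 * real l)) / (3 * real l)) ^ y"
proof -
  define z where "z = (y - 1) div (3*l)"
  have zr: "real z \<le> real y / (3 * real l)"
  proof -
    have "3*l*z \<le> y - 1" unfolding z_def by (rule times_div_less_eq_dividend)
    then have "3*l*z \<le> y" by linarith
    then have "3 * real l * real z \<le> real y" by (metis of_nat_le_iff of_nat_mult of_nat_numeral)
    then show ?thesis using l by (simp add: field_simps)
  qed
  have rcz: "real ((c+2)*z) = (real c + 2) * real z" by (simp only: of_nat_mult of_nat_add of_nat_numeral)
  have a1: "real Ae1 \<le> real (n ^ (c+2))" using A by (simp only: of_nat_le_iff)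
  have "real (Ae1 ^ z) = real Ae1 ^ z" by simp
  also have "\<dots> \<le> real (n ^ (c+2)) ^ z" by (rule power_mono[OF a1]) simp
  finally have "real (Ae1 ^ z) \<le> real (n ^ (c+2)) ^ z" .
  also have "\<dots> = real n ^ ((c+2)*z)" by (simp only: of_nat_power power_mult)
  also have "\<dots> = real n powr (real ((c+2)*z))" by (rule powr_realpow[symmetric]) (use n in simp)
  also have "\<dots> = real n powr ((real c + 2) * real z)" by (simp only: rcz)
  also have "\<dots> \<le> real n powr ((real c + 2) * (real y / (3 * real l)))"
    using n zr by (intro powr_mono mult_left_mono) auto
  also have "\<dots> = (real n powr ((real c + 2) / (3 * real l))) ^ y"
  proof -
    have "(real n powr ((real c + 2) / (3 * real l))) ^ y = real n powr (real y * ((real c + 2) / (3 * real l)))"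
      by (rule powr_power) (use n in simp)
    also have "real y * ((real c + 2) / (3 * real l)) = (real c + 2) * (real y / (3 * real l))" by simp
    finally show ?thesis by simp
  qed
  finally have "real (Ae1 ^ z) \<le> (real n powr ((real c + 2) / (3 * real l))) ^ y" .
  then have "real (Ae1 ^ z) * (1/(3*real l))^y \<le> (real n powr ((real c + 2) / (3 * real l))) ^ y * (1/(3*real l))^y"
    by (rule mult_right_mono) simp
  also have "\<dots> = (real n powr ((real c + 2) / (3 * real l)) / (3 * real l)) ^ y"
    by (simp add: power_divide)
  finally show ?thesis unfolding z_def .
qed

lemma slot_bound:
  fixes n e c :: nat
  assumes n: "n \<ge> 4" and e: "2^e < 2*n^c"
  shows "n * (2*2^e) + 1 \<le> n^(c+2)"
proof -
  have a: "2*2^e + 1 \<le> 4*n^c" using e by linarith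
  have "n * (2*2^e + 1) \<le> n * (4*n^c)" using a by (rule mult_le_mono2)
  then have b: "n * (2*2^e) + n \<le> n * (4*n^c)" by (simp add: distrib_left)
  have "4 * n^c \<le> n * n^c" using n by (intro mult_le_mono1) simp
  then have "n * (4*n^c) \<le> n * (n * n^c)" by (rule mult_le_mono2)
  also have "n * (n * n^c) = n^(c+2)" by (simp add: power_add power2_eq_square)
  finally show ?thesis using b n by linarith
qed

lemma sum_nonempty_subsets:
  fixes r :: real
  assumes "finite A"
  shows "(\<Sum>Y\<in>{Y. Y \<subseteq> A \<and> Y \<noteq> {}}. r ^ card Y) = (1 + r) ^ card A - 1"
proof -
  have eq: "{Y. Y \<subseteq> A \<and> Y \<noteq> {}} = Pow A - {{}}" by auto
  have "(\<Sum>Y\<in>Pow A. r ^ card Y) = r ^ card {} + (\<Sum>Y\<in>Pow A - {{}}. r ^ card Y)"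
    using sum.remove[of "Pow A" "{}" "\<lambda>Y. r ^ card Y"] assms by simp
  then show ?thesis using sum_pow_subsets[OF assms, of r] unfolding eq by simp
qed

lemma exp_pow_bound:
  fixes r :: real and N :: nat
  assumes "r \<ge> 0" "real N * r \<le> 1/2"
  shows "(1 + r) ^ N - 1 \<le> 2 * real N * r"
proof -
  have "(1 + r) ^ N \<le> exp r ^ N" by (rule power_mono) (use assms in auto)
  also have "exp r ^ N = exp (real N * r)" by (rule exp_of_nat_mult[symmetric])
  also have "exp (real N * r) \<le> 1 + 2 * (real N * r)" by (rule real_exp_bound_lemma) (use assms in auto)
  finally show ?thesis by simp
qed

lemma final_num:
  fixes M :: "nat set" and S :: "nat list set" and c :: nat and b b' :: real
  assumes finM: "finite M" and n32: "card M \<ge> 32" and c: "c \<ge> 1" and finS: "finite S"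
    and cS: "card S \<le> card M ^ c" and bdef: "b = 3 * real c + \<bar>b'\<bar> + 1"
  defines "l \<equiv> sched_l (card M) c" and "K \<equiv> sched_k (card M) c b" and "pl \<equiv> pool M c S"
    and "E \<equiv> {e::nat. 2^e < 2*card M^c}"
  shows "(\<Sum>e\<in>E. \<Sum>Y\<in>{Y. Y \<subseteq> pl \<and> Y \<noteq> {}}.
        (real ((card (M \<times> {..<2*2^e::nat}) + 1) ^ ((card Y - 1) div (3*l))) * (1/(3*real l))^card Y)^K)
      \<le> real (card M) powr (- b')"
proof -
  define n where "n = card M"
  define q where "q = real n powr ((real c + 2) / (3 * real l)) / (3 * real l)"
  define r where "r = q ^ K"
  define R where "R = 4 * (b + 1) * (2 * real c + 1)"
  define N where "N = card pl"
  have n: "n \<ge> 32" using n32 unfolding n_def .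
  have nr: "real n \<ge> 32" using n by simp
  have b0: "b \<ge> 0" using bdef by simp
  have l1: "l \<ge> 1" using params(6)[OF n c] unfolding l_def n_def by simp
  have qb: "q \<ge> 0" "r \<le> real n powr (- R)"
    using q_bound[OF n c b0] unfolding q_def r_def R_def l_def K_def n_def by auto
  have r0: "r \<ge> 0" unfolding r_def using qb(1) by simp
  have finpl: "finite pl" unfolding pl_def using pool_finite[OF finS] .
  have Nb: "real N \<le> real n ^ (2*c)"
  proof -
    have "N = card S * n ^ c" unfolding N_def pl_def pool_def n_def by (simp add: card_cartesian_product)
    also have "\<dots> \<le> n ^ c * n ^ c" using cS unfolding n_def by simp
    also have "\<dots> = n ^ (2*c)" by (simp add: power_add[symmetric] mult_2)
    finally have "N \<le> n ^ (2*c)" .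
    then have "real N \<le> real (n ^ (2*c))" by (simp only: of_nat_le_iff)
    then show ?thesis by simp
  qed
  have termb: "(real ((card (M \<times> {..<2*2^e::nat}) + 1) ^ ((card Y - 1) div (3*l))) * (1/(3*real l))^card Y)^K
      \<le> r ^ card Y" if e: "e \<in> E" for e and Y :: "job set"
  proof -
    have e2: "2^e < 2*n^c" using e unfolding E_def n_def by simp
    have "card (M \<times> {..<2*2^e::nat}) = n * (2*2^e)" unfolding n_def by (simp add: card_cartesian_product)
    then have A: "card (M \<times> {..<2*2^e::nat}) + 1 \<le> n ^ (c + 2)" using slot_bound[OF _ e2] n by simp
    have n1: "n \<ge> 1" using n by simp
    have "real ((card (M \<times> {..<2*2^e::nat}) + 1) ^ ((card Y - 1) div (3*l))) * (1/(3*real l))^card Y \<le> q ^ card Y"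
      unfolding q_def by (rule term_bound[OF n1 l1 A])
    then have "(real ((card (M \<times> {..<2*2^e::nat}) + 1) ^ ((card Y - 1) div (3*l))) * (1/(3*real l))^card Y)^K
      \<le> (q ^ card Y) ^ K" by (rule power_mono) simp
    also have "(q ^ card Y) ^ K = r ^ card Y" unfolding r_def by (simp only: power_mult[symmetric] mult.commute)
    finally show ?thesis .
  qed
  have NR: "real N * r \<le> real n powr (2 * real c - R)"
  proof -
    have "real N * r \<le> real n ^ (2*c) * real n powr (- R)"
      using Nb qb(2) r0 by (intro mult_mono) auto
    also have "real n ^ (2*c) = real n powr (real (2*c))" by (rule powr_realpow[symmetric]) (use nr in simp)
    also have "real n powr (real (2*c)) * real n powr (- R) = real n powr (real (2*c) + - R)"
      by (rule powr_add[symmetric])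
    also have "real (2*c) + - R = 2 * real c - R" by simp
    finally show ?thesis .
  qed
  have Rbig: "R \<ge> 3 * real c + b' + 1 + 1"
  proof -
    have "2 * real c + 1 \<ge> 1" by simp
    then have h: "4 * (b + 1) * 1 \<le> 4 * (b + 1) * (2 * real c + 1)" using b0 by (intro mult_left_mono) auto
    have h2: "3 * real c + b' + 1 + 1 \<le> 4 * (b + 1) * 1" using bdef abs_ge_self[of b'] by simp
    show ?thesis unfolding R_def by (rule order_trans[OF h2 h])
  qed
  have Rbig2: "R \<ge> 2 * real c + 1"
  proof -
    have "2 * real c + 1 \<ge> 1" by simp
    then have h: "4 * (b + 1) * 1 \<le> 4 * (b + 1) * (2 * real c + 1)" using b0 by (intro mult_left_mono) auto
    have h2: "2 * real c + 1 \<le> 4 * (b + 1) * 1" using bdef abs_ge_zero[of b'] by simp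
    show ?thesis unfolding R_def by (rule order_trans[OF h2 h])
  qed
  have NRh: "real N * r \<le> 1/2"
  proof -
    have "real n powr (2 * real c - R) \<le> real n powr (-1)" using nr Rbig2 by (intro powr_mono) auto
    also have "real n powr (-1) = 1 / real n" using nr by (simp add: powr_minus_divide)
    also have "1 / real n \<le> 1/2" using nr by simp
    finally show ?thesis using NR by linarith
  qed
  have inner: "(\<Sum>Y\<in>{Y. Y \<subseteq> pl \<and> Y \<noteq> {}}. r ^ card Y) \<le> 2 * real N * r"
    unfolding sum_nonempty_subsets[OF finpl] N_def[symmetric] by (rule exp_pow_bound[OF r0 NRh])
  have cE: "real (card E) \<le> 2 * real n ^ c"
  proof -
    have "E \<subseteq> {..<2*n^c}" unfolding E_def n_def by (auto intro: less_trans[OF less_exp])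
    then have "card E \<le> card {..<2*n^c}" by (intro card_mono) auto
    then have "card E \<le> 2*n^c" by simp
    then have "real (card E) \<le> real (2*n^c)" by (simp only: of_nat_le_iff)
    then show ?thesis by simp
  qed
  have "(\<Sum>e\<in>E. \<Sum>Y\<in>{Y. Y \<subseteq> pl \<and> Y \<noteq> {}}.
        (real ((card (M \<times> {..<2*2^e::nat}) + 1) ^ ((card Y - 1) div (3*l))) * (1/(3*real l))^card Y)^K)
      \<le> (\<Sum>e\<in>E. \<Sum>Y\<in>{Y. Y \<subseteq> pl \<and> Y \<noteq> {}}. r ^ card Y)"
    by (intro sum_mono termb)
  also have "\<dots> \<le> (\<Sum>e\<in>E. 2 * real N * r)" by (intro sum_mono inner)
  also have "\<dots> = real (card E) * (2 * real N * r)" by simp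
  also have "\<dots> \<le> (2 * real n ^ c) * (2 * real n powr (2 * real c - R))"
  proof (rule mult_mono[OF cE])
    show "2 * real N * r \<le> 2 * real n powr (2 * real c - R)" using NR by linarith
    show "0 \<le> 2 * real N * r" using r0 by simp
  qed simp
  also have "\<dots> = 4 * (real n ^ c * real n powr (2 * real c - R))" by simp
  also have "real n ^ c * real n powr (2 * real c - R) = real n powr (3 * real c - R)"
  proof -
    have "real n ^ c = real n powr real c" by (rule powr_realpow[symmetric]) (use nr in simp)
    then have "real n ^ c * real n powr (2 * real c - R) = real n powr (real c + (2 * real c - R))"
      by (simp only: powr_add)
    also have "real c + (2 * real c - R) = 3 * real c - R" by simp
    finally show ?thesis .
  qed
  also have "4 * real n powr (3 * real c - R) \<le> real n * real n powr (3 * real c - R)"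
    using nr by (intro mult_right_mono) auto
  also have "real n * real n powr (3 * real c - R) = real n powr (1 + (3 * real c - R))"
    using nr by (simp add: powr_add)
  also have "\<dots> \<le> real n powr (- b')" using nr Rbig by (intro powr_mono) auto
  finally show ?thesis unfolding n_def .
qed

lemma time_bound:
  fixes M :: "nat set" and c :: nat and b \<beta> :: real and T :: nat
  assumes n32: "card M \<ge> 32" and c: "c \<ge> 1" and b0: "b \<ge> 0" and \<beta>: "\<beta> \<ge> 1" and T1: "1 \<le> T"
  shows "real (noisy_time (card M) c b \<beta> T) \<le>
     (16*151*real c*(16*(b+1)*(2*real c+1)+1)) * ln (real (card M)) powr 2 * \<beta> * real T"
proof -
  define n where "n = card M"
  define x where "x = ln (real n)"
  define l where "l = sched_l n c"
  define W where "W = 8 * (b + 1) * (2 * real c + 1)"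
  have n: "n \<ge> 32" using n32 unfolding n_def .
  note P = params[OF n c, folded x_def l_def]
  have x1: "x \<ge> 1" using P(1) by simp
  have lnl: "ln (real l) \<ge> 1/2" using P(2,4) by linarith
  have W0: "W \<ge> 0" unfolding W_def using b0 by simp
  have Kb: "real (sched_k n c b) \<le> (2 * W + 1) * x"
  proof -
    define v where "v = W * x / ln (real l)"
    have v0: "v \<ge> 0" unfolding v_def using W0 x1 lnl by simp
    have "sched_k n c b = nat \<lceil>v\<rceil>" unfolding sched_k_def v_def W_def x_def l_def by simp
    then have "real (sched_k n c b) = real_of_int \<lceil>v\<rceil>" using v0 by simp
    also have "\<dots> \<le> v + 1" using ceiling_correct[of v] by linarith
    also have "v \<le> W * x / (1/2)" unfolding v_def using lnl W0 x1 by (intro divide_left_mono) auto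
    also have "W * x / (1/2) + 1 \<le> (2 * W + 1) * x" using x1 W0 by (simp add: algebra_simps)
    finally have "real (sched_k n c b) \<le> (2 * W + 1) * x" by simp
    then show ?thesis by simp
  qed
  have W2: "2 * W + 1 = 16*(b+1)*(2*real c+1)+1" unfolding W_def by simp
  define L where "L = (2::nat) ^ sched_e T"
  have "L < 2 * T" using sched_e_bounds[OF T1] unfolding L_def by simp
  then have "L \<le> 2 * T" by simp
  then have "real L \<le> real (2 * T)" by (simp only: of_nat_le_iff)
  then have L2: "real L \<le> 2 * real T" by simp
  define lp where "lp = sched_l' n c \<beta>"
  have lp: "lp = 4 * \<beta> * real l" unfolding lp_def sched_l'_def l_def ..
  have l151: "real l \<le> 151 * real c * x" using P(5) by simp
  have lpb: "lp \<le> 4 * \<beta> * (151 * real c * x)" unfolding lp using l151 \<beta> by (intro mult_left_mono) auto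
  have lp1: "lp \<ge> 1"
  proof -
    have "real l \<ge> 1" using P(6) by simp
    then have "4 * \<beta> * real l \<ge> 4 * 1 * 1" using \<beta> by (intro mult_mono) auto
    then show ?thesis unfolding lp by simp
  qed
  have X0: "0 \<le> 2 * real L * lp - 1"
  proof -
    have "real L \<ge> 1" unfolding L_def by simp
    then have "real L * lp \<ge> 1 * 1" using lp1 by (intro mult_mono) auto
    then show ?thesis by simp
  qed
  have NNb: "real (weak_steps n c \<beta> T) \<le> 2 * real L * lp"
  proof -
    have "weak_steps n c \<beta> T = nat \<lfloor>2 * real L * lp - 1\<rfloor> + 1"
      unfolding weak_steps_def L_def lp_def by (rule card_nat_le_real) (use X0 in \<open>simp add: L_def lp_def\<close>)
    moreover have "real (nat \<lfloor>2 * real L * lp - 1\<rfloor>) \<le> 2 * real L * lp - 1" using X0 by simp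
    ultimately show ?thesis by simp
  qed
  also have "2 * real L * lp \<le> 2 * (2 * real T) * (4 * \<beta> * (151 * real c * x))"
    using L2 lpb lp1 by (intro mult_mono) auto
  also have "2 * (2 * real T) * (4 * \<beta> * (151 * real c * x)) = 16 * 151 * real c * x * \<beta> * real T"
    by (simp only: mult_ac)
  finally have NNb2: "real (weak_steps n c \<beta> T) \<le> 16 * 151 * real c * x * \<beta> * real T" .
  have "real (noisy_time n c b \<beta> T) = real (sched_k n c b) * real (weak_steps n c \<beta> T)"
    unfolding noisy_time_def by simp
  also have "\<dots> \<le> ((2 * W + 1) * x) * (16 * 151 * real c * x * \<beta> * real T)"
    using Kb NNb2 by (intro mult_mono) auto
  also have "((2 * W + 1) * x) * (16 * 151 * real c * x * \<beta> * real T) = (16*151*real c*(2 * W + 1)) * (x * x) * \<beta> * real T"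
    by (simp only: mult_ac)
  also have "x * x = x powr 2"
  proof -
    have "x powr 2 = x ^ 2" using x1 by (intro powr_numeral) simp
    then show ?thesis by (simp add: power2_eq_square)
  qed
  also note W2
  finally show ?thesis unfolding x_def n_def .
qed

theorem lemma5p6:
  fixes c :: nat and b' :: real
  assumes "c \<ge> 1"
  shows "\<exists>b::real. b > 0 \<and> (\<exists>C d :: real.
     \<forall>M :: nat set. \<forall>S :: nat list set.
       finite M \<and> card M \<ge> 32 \<and> S \<subseteq> lists M \<and> finite S \<and> card S \<le> card M ^ c
       \<and> (\<forall>s\<in>S. length s \<le> card M ^ c) \<longrightarrow>
       (\<exists>A\<in>sets rand_space.
          measure rand_space A \<ge> 1 - real (card M) powr (- b') \<and>
          (\<forall>\<omega>\<in>A. \<forall>J. valid_jobs M c S J \<longrightarrow>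
             (\<forall>(\<beta>::real) (T::nat). \<beta> \<ge> 1 \<and> 1 \<le> T \<and> T \<le> card M ^ c \<longrightarrow>
                real (noisy_time (card M) c b \<beta> T) \<le> C * ln (real (card M)) powr d * \<beta> * real T \<and>
                (\<forall>JS P. good_subset M \<beta> T J JS \<and> noisy_run M c b \<beta> T \<omega> J P \<longrightarrow>
                   4 * card {j\<in>JS. P (noisy_time (card M) c b \<beta> T) j = length (fst j)}
                     \<ge> card JS)))))"
proof -
  note c = assms
  define b where "b = 3 * real c + \<bar>b'\<bar> + 1"
  define C where "C = 16*151*real c*(16*(b+1)*(2*real c+1)+1)"
  have b0: "b > 0" unfolding b_def by simp
  have main: "\<forall>M :: nat set. \<forall>S :: nat list set.
       finite M \<and> card M \<ge> 32 \<and> S \<subseteq> lists M \<and> finite S \<and> card S \<le> card M ^ c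
       \<and> (\<forall>s\<in>S. length s \<le> card M ^ c) \<longrightarrow>
       (\<exists>A\<in>sets rand_space.
          measure rand_space A \<ge> 1 - real (card M) powr (- b') \<and>
          (\<forall>\<omega>\<in>A. \<forall>J. valid_jobs M c S J \<longrightarrow>
             (\<forall>(\<beta>::real) (T::nat). \<beta> \<ge> 1 \<and> 1 \<le> T \<and> T \<le> card M ^ c \<longrightarrow>
                real (noisy_time (card M) c b \<beta> T) \<le> C * ln (real (card M)) powr 2 * \<beta> * real T \<and>
                (\<forall>JS P. good_subset M \<beta> T J JS \<and> noisy_run M c b \<beta> T \<omega> J P \<longrightarrow>
                   4 * card {j\<in>JS. P (noisy_time (card M) c b \<beta> T) j = length (fst j)}
                     \<ge> card JS))))"
  proof (intro allI impI)
    fix M :: "nat set" and S :: "nat list set"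
    assume H: "finite M \<and> card M \<ge> 32 \<and> S \<subseteq> lists M \<and> finite S \<and> card S \<le> card M ^ c
       \<and> (\<forall>s\<in>S. length s \<le> card M ^ c)"
    then have finM: "finite M" and n32: "card M \<ge> 32" and SM: "S \<subseteq> lists M" and finS: "finite S"
      and cS: "card S \<le> card M ^ c" by auto
    interpret P: prob_space rand_space by (rule rs_prob)
    define A where "A = goodset M c b S"
    have As: "A \<in> sets rand_space" unfolding A_def by (rule goodset_sets[OF finS])
    have l1: "sched_l (card M) c \<ge> 1" using params(6)[OF n32 c] by simp
    have "measure rand_space (UNIV - A) \<le> real (card M) powr (- b')"
      unfolding A_def
      by (rule order_trans[OF bad_bound[OF finM finS l1] final_num[OF finM n32 c finS cS b_def]])
    moreover have "measure rand_space (UNIV - A) = 1 - measure rand_space A"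
      using P.prob_compl[OF As] by simp
    ultimately have mA: "measure rand_space A \<ge> 1 - real (card M) powr (- b')" by simp
    have rest: "\<forall>\<omega>\<in>A. \<forall>J. valid_jobs M c S J \<longrightarrow>
             (\<forall>(\<beta>::real) (T::nat). \<beta> \<ge> 1 \<and> 1 \<le> T \<and> T \<le> card M ^ c \<longrightarrow>
                real (noisy_time (card M) c b \<beta> T) \<le> C * ln (real (card M)) powr 2 * \<beta> * real T \<and>
                (\<forall>JS P. good_subset M \<beta> T J JS \<and> noisy_run M c b \<beta> T \<omega> J P \<longrightarrow>
                   4 * card {j\<in>JS. P (noisy_time (card M) c b \<beta> T) j = length (fst j)}
                     \<ge> card JS))"
    proof (intro ballI allI impI conjI)
      fix \<omega> J and \<beta> :: real and T :: nat assume om: "\<omega> \<in> A" and vJ: "valid_jobs M c S J"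
        and BT: "\<beta> \<ge> 1 \<and> 1 \<le> T \<and> T \<le> card M ^ c"
      show "real (noisy_time (card M) c b \<beta> T) \<le> C * ln (real (card M)) powr 2 * \<beta> * real T"
        unfolding C_def using time_bound[OF n32 c _ _ _, of b \<beta> T] b0 BT by simp
      fix JS P assume gr: "good_subset M \<beta> T J JS \<and> noisy_run M c b \<beta> T \<omega> J P"
      show "4 * card {j\<in>JS. P (noisy_time (card M) c b \<beta> T) j = length (fst j)} \<ge> card JS"
        using det_main[OF finM l1 SM om[unfolded A_def] vJ _ _ _ _ _] BT gr by blast
    qed
    show "\<exists>A\<in>sets rand_space.
          measure rand_space A \<ge> 1 - real (card M) powr (- b') \<and>
          (\<forall>\<omega>\<in>A. \<forall>J. valid_jobs M c S J \<longrightarrow>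
             (\<forall>(\<beta>::real) (T::nat). \<beta> \<ge> 1 \<and> 1 \<le> T \<and> T \<le> card M ^ c \<longrightarrow>
                real (noisy_time (card M) c b \<beta> T) \<le> C * ln (real (card M)) powr 2 * \<beta> * real T \<and>
                (\<forall>JS P. good_subset M \<beta> T J JS \<and> noisy_run M c b \<beta> T \<omega> J P \<longrightarrow>
                   4 * card {j\<in>JS. P (noisy_time (card M) c b \<beta> T) j = length (fst j)}
                     \<ge> card JS)))"
      using mA rest As by blast
  qed
  show ?thesis
    by (rule exI[of _ b], rule conjI[OF b0], rule exI[of _ C], rule exI[of _ 2], rule main)
qed

end
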